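(* Let $A$ be a unital C*-algebra and $\mathcal H$ a countably or finitely generated Hilbert $A$-module. If $\mathcal H$ possesses an orthogonal standard Riesz basis, then $\mathcal H$ possesses an orthogonal standard Riesz basis $\{x_j : j\in\mathbb J\}$ with $\langle x_j,x_j\rangle=\langle x_j,x_j\rangle^2$ for every $j\in\mathbb J$, i.e. an orthogonal Hilbert basis that is a standard normalized tight frame.
   Context: A (left) Hilbert $A$-module is a left $A$-module $\mathcal H$ with an $A$-valued inner product $\langle\cdot,\cdot\rangle$, $A$-linear in the first argument, with $\langle x,y\rangle=\langle y,x\rangle^*$, $\langle x,x\rangle\ge0$ and $=0$ only for $x=0$, complete in $\|x\|=\|\langle x,x\rangle\|^{1/2}$. Finitely generated: every element is an $A$-linear combination of finitely many fixed elements; countably generated: some countable subset has norm-dense $A$-linear span. A sequence $\{x_j:j\in\mathbb J\}$ ($\mathbb J$ finite or countable) is a frame if there are $C,D>0$ with $C\langle x,x\rangle\le\sum_j\langle x,x_j\rangle\langle x_j,x\rangle\le D\langle x,x\rangle$ for all $x$; normalized tight if $C=D=1$ works; standard if this series converges in norm for all $x$. A standard Riesz basis is a frame whose $A$-linear span is norm-dense and such that an $A$-linear combination $\sum_{j\in S}a_jx_j$ ($a_j\in A$) is zero only if every summand $a_jx_j$ is zero. A Hilbert basis is a set with norm-dense $A$-linear span satisfying the same zero-representation uniqueness property and $\|x_j\|=1$ for all $j$. Orthogonal means $\langle x_i,x_j\rangle=0$ for $i\neq j$. *)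

theory Defs
  imports "HOL-Analysis.Analysis"
begin

text \<open>A unital C*-algebra is modelled on a type 'a of class real_normed_algebra_1 and banach
  (ring structure, unit with norm 1, complete norm), together with an explicit complex scalar
  multiplication sc and an involution star.\<close>

definition cstar_algebra :: "(complex \<Rightarrow> 'a::{real_normed_algebra_1,banach} \<Rightarrow> 'a) \<Rightarrow> ('a \<Rightarrow> 'a) \<Rightarrow> bool" where
  "cstar_algebra sc star \<longleftrightarrow>
     (\<forall>c a b. sc c (a + b) = sc c a + sc c b) \<and>
     (\<forall>c d a. sc (c + d) a = sc c a + sc d a) \<and>
     (\<forall>c d a. sc (c * d) a = sc c (sc d a)) \<and>
     (\<forall>r a. sc (complex_of_real r) a = scaleR r a) \<and>
     (\<forall>c a b. sc c (a * b) = sc c a * b \<and> sc c (a * b) = a * sc c b) \<and>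
     (\<forall>c a. norm (sc c a) = cmod c * norm a) \<and>
     (\<forall>a. star (star a) = a) \<and>
     (\<forall>a b. star (a + b) = star a + star b) \<and>
     (\<forall>c a. star (sc c a) = sc (cnj c) (star a)) \<and>
     (\<forall>a b. star (a * b) = star b * star a) \<and>
     (\<forall>a. norm (star a * a) = (norm a)\<^sup>2)"

definition alg_spectrum :: "(complex \<Rightarrow> 'a::real_normed_algebra_1 \<Rightarrow> 'a) \<Rightarrow> 'a \<Rightarrow> complex set" where
  "alg_spectrum sc a = {z. \<not> (\<exists>b. (a - sc z 1) * b = 1 \<and> b * (a - sc z 1) = 1)}"

definition cpos :: "(complex \<Rightarrow> 'a::real_normed_algebra_1 \<Rightarrow> 'a) \<Rightarrow> ('a \<Rightarrow> 'a) \<Rightarrow> 'a \<Rightarrow> bool" where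
  "cpos sc star a \<longleftrightarrow> star a = a \<and> alg_spectrum sc a \<subseteq> {z. Im z = 0 \<and> 0 \<le> Re z}"

definition cle :: "(complex \<Rightarrow> 'a::real_normed_algebra_1 \<Rightarrow> 'a) \<Rightarrow> ('a \<Rightarrow> 'a) \<Rightarrow> 'a \<Rightarrow> 'a \<Rightarrow> bool" where
  "cle sc star a b \<longleftrightarrow> cpos sc star (b - a)"

definition hnorm :: "('h \<Rightarrow> 'h \<Rightarrow> 'a::real_normed_algebra_1) \<Rightarrow> 'h \<Rightarrow> real" where
  "hnorm ip x = sqrt (norm (ip x x))"

definition hclosure :: "('h::ab_group_add \<Rightarrow> 'h \<Rightarrow> 'a::real_normed_algebra_1) \<Rightarrow> 'h set \<Rightarrow> 'h set" where
  "hclosure ip S = {x. \<exists>f. (\<forall>n. f n \<in> S) \<and> (\<lambda>n. hnorm ip (f n - x)) \<longlonglongrightarrow> 0}"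

text \<open>Left Hilbert A-module structure on the whole type 'h (the module H is UNIV).\<close>
definition hilbert_module :: "(complex \<Rightarrow> 'a::{real_normed_algebra_1,banach} \<Rightarrow> 'a) \<Rightarrow> ('a \<Rightarrow> 'a)
    \<Rightarrow> ('a \<Rightarrow> 'h::ab_group_add \<Rightarrow> 'h) \<Rightarrow> ('h \<Rightarrow> 'h \<Rightarrow> 'a) \<Rightarrow> bool" where
  "hilbert_module sc star act ip \<longleftrightarrow>
     (\<forall>a b x. act (a + b) x = act a x + act b x) \<and>
     (\<forall>a x y. act a (x + y) = act a x + act a y) \<and>
     (\<forall>a b x. act (a * b) x = act a (act b x)) \<and>
     (\<forall>x. act 1 x = x) \<and>
     (\<forall>x y z. ip (x + y) z = ip x z + ip y z) \<and>
     (\<forall>a x y. ip (act a x) y = a * ip x y) \<and>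
     (\<forall>x y. ip x y = star (ip y x)) \<and>
     (\<forall>x. cpos sc star (ip x x)) \<and>
     (\<forall>x. ip x x = 0 \<longrightarrow> x = 0) \<and>
     (\<forall>f::nat \<Rightarrow> 'h. (\<forall>e>0. \<exists>N. \<forall>m\<ge>N. \<forall>n\<ge>N. hnorm ip (f m - f n) < e)
        \<longrightarrow> (\<exists>x. (\<lambda>n. hnorm ip (f n - x)) \<longlonglongrightarrow> 0))"

definition alin_span :: "('a \<Rightarrow> 'h::ab_group_add \<Rightarrow> 'h) \<Rightarrow> ('i \<Rightarrow> 'h) \<Rightarrow> 'i set \<Rightarrow> 'h set" where
  "alin_span act xs J = {(\<Sum>j\<in>F. act (c j) (xs j)) | F c. finite F \<and> F \<subseteq> J}"

definition finitely_generated :: "('a \<Rightarrow> 'h::ab_group_add \<Rightarrow> 'h) \<Rightarrow> bool" where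
  "finitely_generated act \<longleftrightarrow> (\<exists>G. finite G \<and> alin_span act id G = UNIV)"

definition countably_generated :: "('a \<Rightarrow> 'h::ab_group_add \<Rightarrow> 'h) \<Rightarrow> ('h \<Rightarrow> 'h \<Rightarrow> 'a::real_normed_algebra_1) \<Rightarrow> bool" where
  "countably_generated act ip \<longleftrightarrow> (\<exists>G. countable G \<and> hclosure ip (alin_span act id G) = UNIV)"

definition standard_frame :: "(complex \<Rightarrow> 'a::{real_normed_algebra_1,banach} \<Rightarrow> 'a) \<Rightarrow> ('a \<Rightarrow> 'a)
    \<Rightarrow> ('h \<Rightarrow> 'h \<Rightarrow> 'a) \<Rightarrow> (nat \<Rightarrow> 'h) \<Rightarrow> nat set \<Rightarrow> bool" where
  "standard_frame sc star ip xs J \<longleftrightarrow>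
     (\<exists>C D::real. C > 0 \<and> D > 0 \<and>
       (\<forall>x. \<exists>s. ((\<lambda>j. ip x (xs j) * ip (xs j) x) has_sum s) J \<and>
              cle sc star (scaleR C (ip x x)) s \<and> cle sc star s (scaleR D (ip x x))))"

definition normalized_tight_standard_frame :: "('h \<Rightarrow> 'h \<Rightarrow> 'a::{real_normed_algebra_1,banach}) \<Rightarrow> (nat \<Rightarrow> 'h) \<Rightarrow> nat set \<Rightarrow> bool" where
  "normalized_tight_standard_frame ip xs J \<longleftrightarrow>
     (\<forall>x. ((\<lambda>j. ip x (xs j) * ip (xs j) x) has_sum ip x x) J)"

definition unique_zero_repr :: "('a::zero \<Rightarrow> 'h::ab_group_add \<Rightarrow> 'h) \<Rightarrow> (nat \<Rightarrow> 'h) \<Rightarrow> nat set \<Rightarrow> bool" where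
  "unique_zero_repr act xs J \<longleftrightarrow>
     (\<forall>S a. finite S \<and> S \<subseteq> J \<and> (\<Sum>j\<in>S. act (a j) (xs j)) = 0 \<longrightarrow> (\<forall>j\<in>S. act (a j) (xs j) = 0))"

definition standard_riesz_basis :: "(complex \<Rightarrow> 'a::{real_normed_algebra_1,banach} \<Rightarrow> 'a) \<Rightarrow> ('a \<Rightarrow> 'a)
    \<Rightarrow> ('a \<Rightarrow> 'h::ab_group_add \<Rightarrow> 'h) \<Rightarrow> ('h \<Rightarrow> 'h \<Rightarrow> 'a) \<Rightarrow> (nat \<Rightarrow> 'h) \<Rightarrow> nat set \<Rightarrow> bool" where
  "standard_riesz_basis sc star act ip xs J \<longleftrightarrow>
     standard_frame sc star ip xs J \<and> hclosure ip (alin_span act xs J) = UNIV \<and> unique_zero_repr act xs J"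

definition hilbert_basis :: "('a::{real_normed_algebra_1,banach} \<Rightarrow> 'h::ab_group_add \<Rightarrow> 'h) \<Rightarrow> ('h \<Rightarrow> 'h \<Rightarrow> 'a)
    \<Rightarrow> (nat \<Rightarrow> 'h) \<Rightarrow> nat set \<Rightarrow> bool" where
  "hilbert_basis act ip xs J \<longleftrightarrow>
     hclosure ip (alin_span act xs J) = UNIV \<and> unique_zero_repr act xs J \<and> (\<forall>j\<in>J. hnorm ip (xs j) = 1)"

definition orthogonal_family :: "('h \<Rightarrow> 'h \<Rightarrow> 'a::zero) \<Rightarrow> (nat \<Rightarrow> 'h) \<Rightarrow> nat set \<Rightarrow> bool" where
  "orthogonal_family ip xs J \<longleftrightarrow> (\<forall>i\<in>J. \<forall>j\<in>J. i \<noteq> j \<longrightarrow> ip (xs i) (xs j) = 0)"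

end

theory Submission
  imports Defs "HOL-Computational_Algebra.Fundamental_Theorem_Algebra"
    "HOL-Computational_Algebra.Formal_Power_Series"
begin

definition isinv :: "'a::ring_1 \<Rightarrow> bool" where
  "isinv x \<longleftrightarrow> (\<exists>y. x * y = 1 \<and> y * x = 1)"

lemma isinv_mult: "isinv x \<Longrightarrow> isinv y \<Longrightarrow> isinv (x * y)"
  unfolding isinv_def
proof (elim exE conjE)
  fix x' y' assume a: "x * x' = 1" "x' * x = 1" "y * y' = 1" "y' * y = 1"
  have "x * y * (y' * x') = 1" using a by (metis mult.assoc mult_1_left)
  moreover have "(y' * x') * (x * y) = 1" using a by (metis mult.assoc mult_1_left)
  ultimately show "\<exists>z. x * y * z = 1 \<and> z * (x * y) = 1" by blast
qed

lemma inv_unique: "(x::'a::ring_1) * y = 1 \<Longrightarrow> z * x = 1 \<Longrightarrow> y = z"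
  by (metis mult.assoc mult_1_left mult_1_right)

lemma isinv_comm_left: "x * y = y * x \<Longrightarrow> isinv (x * y) \<Longrightarrow> isinv x"
  unfolding isinv_def
proof (elim exE conjE)
  fix w assume c: "x * y = y * x" and a: "x * y * w = 1" "w * (x * y) = 1"
  have "x * (y * w) = 1" using a by (simp add: mult.assoc)
  moreover have "(w * y) * x = 1" using a c by (simp add: mult.assoc)
  moreover have "y * w = w * y"
    using inv_unique[OF calculation(1) calculation(2)] .
  ultimately show "\<exists>z. x * z = 1 \<and> z * x = 1" by metis
qed

lemma isinv_1 [simp]: "isinv 1" unfolding isinv_def by auto

lemma isinv_uminus: "isinv x \<Longrightarrow> isinv (- x)"
  unfolding isinv_def by (metis minus_mult_minus)

lemma isinv_scaleR: "isinv (x::'a::real_normed_algebra_1) \<Longrightarrow> r \<noteq> 0 \<Longrightarrow> isinv (scaleR r x)"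
  unfolding isinv_def
  by (metis (no_types, lifting) mult_scaleR_left mult_scaleR_right right_inverse scaleR_one scaleR_scaleR)

lemma neumann:
  fixes y :: "'a::{real_normed_algebra_1,banach}"
  assumes "norm y < 1"
  shows "(1 - y) * (\<Sum>n. y ^ n) = 1 \<and> (\<Sum>n. y ^ n) * (1 - y) = 1 \<and>
         norm ((\<Sum>n. y ^ n) - 1) \<le> norm y / (1 - norm y)"
proof -
  have sn: "summable (\<lambda>n. norm y ^ n)" using assms by (simp add: summable_geometric)
  have sa: "summable (\<lambda>n. norm (y ^ n))"
    by (rule summable_comparison_test'[OF sn]) (simp add: norm_power_ineq)
  hence s: "summable (\<lambda>n. y ^ n)" by (rule summable_norm_cancel)
  have t: "(\<lambda>n. y ^ n) \<longlonglongrightarrow> 0"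
  proof -
    have "(\<lambda>n. norm y ^ n) \<longlonglongrightarrow> 0" using assms by (simp add: LIMSEQ_power_zero)
    thus ?thesis
      by (rule Lim_null_comparison[rotated]) (simp add: norm_power_ineq)
  qed
  have ps: "(\<lambda>n. \<Sum>i<n. y ^ i) \<longlonglongrightarrow> (\<Sum>n. y ^ n)" using s by (simp add: summable_LIMSEQ)
  have e1: "(1 - y) * (\<Sum>i<n. y ^ i) = 1 - y ^ n" for n
  proof (induction n)
    case (Suc n)
    have "(1 - y) * (\<Sum>i<Suc n. y ^ i) = (1 - y) * (\<Sum>i<n. y ^ i) + (1 - y) * y ^ n"
      by (simp add: distrib_left)
    also have "\<dots> = 1 - y ^ Suc n" using Suc by (simp add: algebra_simps)
    finally show ?case .
  qed simp
  have e2: "(\<Sum>i<n. y ^ i) * (1 - y) = 1 - y ^ n" for n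
  proof (induction n)
    case (Suc n)
    have "(\<Sum>i<Suc n. y ^ i) * (1 - y) = (\<Sum>i<n. y ^ i) * (1 - y) + y ^ n * (1 - y)"
      by (simp add: distrib_right)
    also have "\<dots> = 1 - y ^ Suc n" using Suc by (simp add: algebra_simps power_commutes)
    finally show ?case .
  qed simp
  have "(\<lambda>n. (1 - y) * (\<Sum>i<n. y ^ i)) \<longlonglongrightarrow> (1 - y) * (\<Sum>n. y ^ n)"
    by (intro tendsto_mult tendsto_const ps)
  moreover have "(\<lambda>n. (1 - y) * (\<Sum>i<n. y ^ i)) \<longlonglongrightarrow> 1"
    unfolding e1 using tendsto_diff[OF tendsto_const t, of 1] by simp
  ultimately have 1: "(1 - y) * (\<Sum>n. y ^ n) = 1" using LIMSEQ_unique by blast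
  have "(\<lambda>n. (\<Sum>i<n. y ^ i) * (1 - y)) \<longlonglongrightarrow> (\<Sum>n. y ^ n) * (1 - y)"
    by (intro tendsto_mult tendsto_const ps)
  moreover have "(\<lambda>n. (\<Sum>i<n. y ^ i) * (1 - y)) \<longlonglongrightarrow> 1"
    unfolding e2 using tendsto_diff[OF tendsto_const t, of 1] by simp
  ultimately have 2: "(\<Sum>n. y ^ n) * (1 - y) = 1" using LIMSEQ_unique by blast
  have s1: "summable (\<lambda>n. y ^ Suc n)" using s by (simp add: summable_Suc_iff del: power_Suc)
  have "(\<Sum>n. y ^ n) - 1 = (\<Sum>n. y ^ Suc n)"
    using suminf_split_head[OF s] by simp
  also have "norm \<dots> \<le> (\<Sum>n. norm y ^ Suc n)"
  proof (rule summable_norm[THEN order_trans])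
    show "summable (\<lambda>n. norm (y ^ Suc n))" by (rule iffD2[OF summable_Suc_iff[of "\<lambda>n. norm (y^n)"]]) (rule sa)
    show "(\<Sum>n. norm (y ^ Suc n)) \<le> (\<Sum>n. norm y ^ Suc n)"
      apply (rule suminf_le)
        apply (rule norm_power_ineq)
      apply (rule iffD2[OF summable_Suc_iff[of "\<lambda>n. norm (y^n)"]], rule sa)
      apply (rule iffD2[OF summable_Suc_iff[of "\<lambda>n. norm y^n"]], rule sn)
      done
  qed
  also have "(\<Sum>n. norm y ^ Suc n) = norm y / (1 - norm y)"
  proof -
    have "(\<Sum>n. norm y ^ Suc n) = norm y * (\<Sum>n. norm y ^ n)"
      using suminf_mult[OF sn, of "norm y"] by simp
    also have "\<dots> = norm y / (1 - norm y)" using assms by (simp add: suminf_geometric divide_simps)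
    finally show ?thesis .
  qed
  finally show ?thesis using 1 2 by simp
qed


lemma geo_left: "(1 - (z::'a::ring_1)) * (\<Sum>i<n. z ^ i) = 1 - z ^ n"
proof (induction n)
  case (Suc n)
  have "(1 - z) * (\<Sum>i<Suc n. z ^ i) = (1 - z) * (\<Sum>i<n. z ^ i) + (1 - z) * z ^ n"
    by (simp add: distrib_left)
  also have "\<dots> = 1 - z ^ Suc n" using Suc by (simp add: algebra_simps)
  finally show ?case .
qed simp

lemma geo_right: "(\<Sum>i<n. z ^ i) * (1 - (z::'a::ring_1)) = 1 - z ^ n"
proof (induction n)
  case (Suc n)
  have "(\<Sum>i<Suc n. z ^ i) * (1 - z) = (\<Sum>i<n. z ^ i) * (1 - z) + z ^ n * (1 - z)"
    by (simp add: distrib_right)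
  also have "\<dots> = 1 - z ^ Suc n" using Suc by (simp add: algebra_simps power_commutes)
  finally show ?case .
qed simp

lemma inv_perturb:
  fixes u v w :: "'a::{real_normed_algebra_1,banach}"
  assumes uv: "u * v = 1" "v * u = 1" and small: "norm (w - u) * norm v \<le> 1/2"
  shows "\<exists>v'. w * v' = 1 \<and> v' * w = 1 \<and> norm (v' - v) \<le> 2 * norm v ^ 2 * norm (w - u)"
proof -
  define y where "y = v * (u - w)"
  have ny: "norm y \<le> norm v * norm (w - u)"
    unfolding y_def by (metis norm_minus_commute norm_mult_ineq)
  hence ny2: "norm y \<le> 1/2" using small by (simp add: mult.commute)
  have wu: "w = u * (1 - y)"
    unfolding y_def by (simp add: algebra_simps mult.assoc[symmetric] uv)
  define g where "g = (\<Sum>n. y ^ n)"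
  have N: "(1 - y) * g = 1" "g * (1 - y) = 1" "norm (g - 1) \<le> norm y / (1 - norm y)"
    using neumann[of y] ny2 unfolding g_def by auto
  have "norm y * 1 \<le> norm y * (2 * (1 - norm y))"
    by (rule mult_left_mono) (use ny2 in auto)
  hence "norm y / (1 - norm y) \<le> 2 * norm y"
    using ny2 norm_ge_zero[of y] by (simp add: divide_simps algebra_simps)
  hence g1: "norm (g - 1) \<le> 2 * norm y" using N(3) by linarith
  have "w * (g * v) = u * ((1 - y) * g) * v" by (simp add: wu mult.assoc)
  hence 1: "w * (g * v) = 1" using N uv by simp
  have "(g * v) * w = g * (v * u) * (1 - y)" by (simp add: wu mult.assoc)
  hence 2: "(g * v) * w = 1" using N uv by simp
  have "norm (g * v - v) = norm ((g - 1) * v)" by (simp add: algebra_simps)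
  also have "\<dots> \<le> norm (g - 1) * norm v" by (rule norm_mult_ineq)
  also have "\<dots> \<le> 2 * norm y * norm v" using g1 by (simp add: mult_right_mono)
  also have "\<dots> \<le> 2 * (norm v * norm (w - u)) * norm v"
    using ny by (simp add: mult_right_mono)
  also have "\<dots> = 2 * norm v ^ 2 * norm (w - u)" by (simp add: power2_eq_square)
  finally show ?thesis using 1 2 by blast
qed

locale cstar =
  fixes sc :: "complex \<Rightarrow> 'a::{real_normed_algebra_1,banach} \<Rightarrow> 'a"
    and star :: "'a \<Rightarrow> 'a"
  assumes cs: "cstar_algebra sc star"
begin

lemmas CS = cs[unfolded cstar_algebra_def]
lemmas sc_add_right = CS[THEN conjunct1, rule_format]
lemmas sc_add_left = CS[THEN conjunct2, THEN conjunct1, rule_format]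
lemmas sc_sc = CS[THEN conjunct2, THEN conjunct2, THEN conjunct1, rule_format]
lemmas sc_real = CS[THEN conjunct2, THEN conjunct2, THEN conjunct2, THEN conjunct1, rule_format]
lemmas sc_mult_lr = CS[THEN conjunct2, THEN conjunct2, THEN conjunct2, THEN conjunct2, THEN conjunct1, rule_format]
lemma sc_mult_left: "sc c (a * b) = sc c a * b" using sc_mult_lr by blast
lemma sc_mult_right: "sc c (a * b) = a * sc c b" using sc_mult_lr by blast
lemmas norm_sc = CS[THEN conjunct2, THEN conjunct2, THEN conjunct2, THEN conjunct2, THEN conjunct2, THEN conjunct1, rule_format]
lemmas star_star [simp] = CS[THEN conjunct2, THEN conjunct2, THEN conjunct2, THEN conjunct2, THEN conjunct2, THEN conjunct2, THEN conjunct1, rule_format]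
lemmas star_add = CS[THEN conjunct2, THEN conjunct2, THEN conjunct2, THEN conjunct2, THEN conjunct2, THEN conjunct2, THEN conjunct2, THEN conjunct1, rule_format]
lemmas star_sc = CS[THEN conjunct2, THEN conjunct2, THEN conjunct2, THEN conjunct2, THEN conjunct2, THEN conjunct2, THEN conjunct2, THEN conjunct2, THEN conjunct1, rule_format]
lemmas star_mult = CS[THEN conjunct2, THEN conjunct2, THEN conjunct2, THEN conjunct2, THEN conjunct2, THEN conjunct2, THEN conjunct2, THEN conjunct2, THEN conjunct2, THEN conjunct1, rule_format]
lemmas cstar_id = CS[THEN conjunct2, THEN conjunct2, THEN conjunct2, THEN conjunct2, THEN conjunct2, THEN conjunct2, THEN conjunct2, THEN conjunct2, THEN conjunct2, THEN conjunct2, rule_format]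

lemma sc_zero_left [simp]: "sc 0 a = 0" using sc_real[of 0 a] by simp
lemma sc_one_left [simp]: "sc 1 a = a" using sc_real[of 1 a] by simp
lemma sc_zero_right [simp]: "sc c 0 = 0" using sc_add_right[of c 0 0] by simp
lemma sc_minus_left: "sc (- c) a = - sc c a"
  using sc_add_left[of "-c" c a] by (simp add: eq_neg_iff_add_eq_0)
lemma sc_minus_right: "sc c (- a) = - sc c a"
  using sc_add_right[of c "-a" a] by (simp add: eq_neg_iff_add_eq_0)
lemma sc_diff_left: "sc (c - d) a = sc c a - sc d a"
  using sc_add_left[of c "-d" a] sc_minus_left by simp
lemma sc_diff_right: "sc c (a - b) = sc c a - sc c b"
  using sc_add_right[of c a "-b"] sc_minus_right by simp
lemma sc1_mult: "sc c 1 * x = sc c x" using sc_mult_left[of c 1 x] by simp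
lemma mult_sc1: "x * sc c 1 = sc c x" using sc_mult_right[of c x 1] by simp
lemma sc_mult_sc: "sc c a * sc d b = sc (c * d) (a * b)"
  by (metis sc_mult_left sc_mult_right sc_sc mult.commute)
lemma sc_scaleR: "sc c (scaleR r a) = scaleR r (sc c a)"
  by (metis mult.commute sc_real sc_sc)
lemma scaleR_sc: "scaleR r (sc c a) = sc (of_real r * c) a"
  by (metis sc_real sc_sc)
lemma sc_power: "(sc c x) ^ n = sc (c ^ n) (x ^ n)"
  by (induction n) (simp_all add: sc_mult_sc)
lemma sc_sum_left: "sc (\<Sum>i\<in>S. f i) a = (\<Sum>i\<in>S. sc (f i) a)"
  by (induction S rule: infinite_finite_induct) (simp_all add: sc_add_left)
lemma sc_sum_right: "sc c (\<Sum>i\<in>S. f i) = (\<Sum>i\<in>S. sc c (f i))"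
  by (induction S rule: infinite_finite_induct) (simp_all add: sc_add_right)
lemma norm_sc1 [simp]: "norm (sc c 1) = cmod c" by (simp add: norm_sc)
lemma sc1_comm: "sc c 1 * x = x * sc c 1" by (simp add: sc1_mult mult_sc1)
lemma sc_of_nat: "sc (of_nat n) a = of_nat n * a"
  using sc_real[of "real n" a] by (simp add: scaleR_conv_of_real)

lemma isinv_sc1: "c \<noteq> 0 \<Longrightarrow> isinv (sc c 1)"
  unfolding isinv_def by (rule exI[of _ "sc (1/c) 1"]) (simp add: sc_mult_sc)

lemma star_zero [simp]: "star 0 = 0" using star_add[of 0 0] by simp
lemma star_one [simp]: "star 1 = 1"
  using star_mult[of "star 1" 1] by simp
lemma star_minus: "star (- a) = - star a"
  using star_add[of "-a" a] by (simp add: eq_neg_iff_add_eq_0)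
lemma star_diff: "star (a - b) = star a - star b"
  using star_add[of a "-b"] star_minus by simp
lemma star_scaleR: "star (scaleR r a) = scaleR r (star a)"
  using star_sc[of "of_real r" a] by (simp add: sc_real)
lemma star_sc1: "star (sc c 1) = sc (cnj c) 1" using star_sc[of c 1] by simp
lemma star_power: "star (a ^ n) = (star a) ^ n"
  by (induction n) (simp_all add: star_mult power_commutes)
lemma star_sum: "star (\<Sum>i\<in>S. f i) = (\<Sum>i\<in>S. star (f i))"
  by (induction S rule: infinite_finite_induct) (simp_all add: star_add)
lemma star_of_nat: "star (of_nat n) = of_nat n"
  by (induction n) (simp_all add: star_add)

lemma norm_star [simp]: "norm (star a) = norm a"
proof -
  have le: "norm b \<le> norm (star b)" for b
  proof (cases "b = 0")
    case False
    have "(norm b)\<^sup>2 \<le> norm (star b) * norm b" using cstar_id[of b] norm_mult_ineq by metis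
    thus ?thesis using False by (simp add: power2_eq_square)
  qed simp
  show ?thesis using le[of a] le[of "star a"] by simp
qed

lemma bounded_linear_star: "bounded_linear star"
  by (rule bounded_linear_intro[of _ 1]) (simp_all add: star_add star_scaleR)

lemma selfadj_norm_sq: "star h = h \<Longrightarrow> norm (h * h) = (norm h)\<^sup>2"
  using cstar_id[of h] by simp

lemma selfadj_norm_pow2: "star h = h \<Longrightarrow> norm (h ^ (2 ^ m)) = norm h ^ (2 ^ m)"
proof (induction m)
  case (Suc m)
  have "h ^ (2 ^ Suc m) = h ^ (2 ^ m) * h ^ (2 ^ m)" by (simp add: power_add[symmetric] mult_2)
  moreover have "star (h ^ (2 ^ m)) = h ^ (2 ^ m)" using Suc by (simp add: star_power)
  ultimately have "norm (h ^ (2 ^ Suc m)) = (norm (h ^ (2 ^ m)))\<^sup>2" using selfadj_norm_sq by simp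
  thus ?case using Suc by (simp add: power_mult[symmetric] mult.commute)
qed simp

abbreviation spec :: "'a \<Rightarrow> complex set" where "spec x \<equiv> alg_spectrum sc x"

lemma spec_iff: "z \<in> spec x \<longleftrightarrow> \<not> isinv (x - sc z 1)"
  unfolding alg_spectrum_def isinv_def by simp

lemma isinv_outside_norm:
  assumes "cmod z > norm x" shows "isinv (x - sc z 1)"
proof -
  have z: "z \<noteq> 0" using assms by (metis norm_ge_zero norm_zero not_less)
  have n: "norm (sc (1/z) x) < 1" using assms z by (simp add: norm_sc norm_divide divide_simps)
  hence "isinv (1 - sc (1/z) x)" using neumann[of "sc (1/z) x"] unfolding isinv_def by blast
  hence "isinv (sc (-z) 1 * (1 - sc (1/z) x))" using isinv_mult isinv_sc1 z by (metis neg_equal_0_iff_equal)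
  moreover have "sc (-z) 1 * (1 - sc (1/z) x) = x - sc z 1"
    using z by (simp add: right_diff_distrib sc1_mult sc_sc[symmetric] sc_minus_left)
  ultimately show ?thesis by simp
qed

lemma spec_le_norm: "z \<in> spec x \<Longrightarrow> cmod z \<le> norm x"
  using isinv_outside_norm spec_iff not_le by blast

lemma selfadj_spec_real:
  assumes h: "star h = h" and z: "z \<in> spec h"
  shows "Im z = 0"
proof (rule ccontr)
  assume im: "Im z \<noteq> 0"
  define t where "t = ((norm h)\<^sup>2 + 1) / (2 * Im z)"
  let ?c = "\<i> * complex_of_real t"
  have eq: "(h + sc ?c 1) - sc (z + ?c) 1 = h - sc z 1" by (simp add: sc_add_left algebra_simps)
  have "z + ?c \<in> spec (h + sc ?c 1)" using z unfolding spec_iff eq .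
  hence c1: "cmod (z + ?c) \<le> norm (h + sc ?c 1)" by (rule spec_le_norm)
  have st: "star (h + sc ?c 1) = h + sc (- ?c) 1" using h by (simp add: star_add star_sc1)
  have prod: "star (h + sc ?c 1) * (h + sc ?c 1) = h * h + sc (complex_of_real (t^2)) 1"
  proof -
    have "star (h + sc ?c 1) * (h + sc ?c 1) = h * h + (sc ?c h + sc (- ?c) h) + sc (- ?c * ?c) 1"
    proof -
      have "(h + sc (- ?c) 1) * (h + sc ?c 1) = h * h + h * sc ?c 1 + (sc (- ?c) 1 * h + sc (- ?c) 1 * sc ?c 1)"
        by (simp add: distrib_left distrib_right add.assoc)
      also have "\<dots> = h * h + (sc ?c h + sc (- ?c) h) + sc (- ?c * ?c) 1"
        by (simp only: mult_sc1 sc1_mult mult_1_left add.assoc) (simp add: sc_sc[symmetric] mult.commute)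
      finally show ?thesis unfolding st .
    qed
    also have "sc ?c h + sc (- ?c) h = 0" by (simp add: sc_minus_left)
    also have "- ?c * ?c = complex_of_real (t^2)" by (simp add: power2_eq_square algebra_simps)
    finally show ?thesis by simp
  qed
  have "(norm (h + sc ?c 1))\<^sup>2 = norm (h * h + sc (complex_of_real (t^2)) 1)"
    using cstar_id[of "h + sc ?c 1"] prod by simp
  also have "\<dots> \<le> norm (h * h) + t^2"
    using norm_triangle_ineq[of "h*h" "sc (complex_of_real (t^2)) 1"] by (simp add: norm_power)
  also have "norm (h * h) \<le> (norm h)\<^sup>2" by (simp add: power2_eq_square norm_mult_ineq)
  finally have c2: "(norm (h + sc ?c 1))\<^sup>2 \<le> (norm h)\<^sup>2 + t^2" by simp
  have "(cmod (z + ?c))\<^sup>2 \<le> (norm (h + sc ?c 1))\<^sup>2"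
    using c1 by (simp add: power_mono)
  hence "(Re z)\<^sup>2 + (Im z + t)\<^sup>2 \<le> (norm h)\<^sup>2 + t^2"
    using c2 by (simp add: cmod_power2)
  hence "(Im z)\<^sup>2 + 2 * t * Im z \<le> (norm h)\<^sup>2"
    by (simp add: power2_eq_square algebra_simps) (smt (verit) zero_le_square)
  moreover have "2 * t * Im z = (norm h)\<^sup>2 + 1" using im unfolding t_def by simp
  ultimately show False by (smt (verit) zero_le_power2)
qed

end

definition ainv :: "'a::ring_1 \<Rightarrow> 'a" where
  "ainv x = (SOME y. x * y = 1 \<and> y * x = 1)"

lemma ainv: "isinv x \<Longrightarrow> x * ainv x = 1 \<and> ainv x * x = 1"
  unfolding isinv_def ainv_def by (rule someI_ex)

lemma ainv_eq: "x * y = 1 \<Longrightarrow> y * x = 1 \<Longrightarrow> ainv x = y"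
  by (metis ainv inv_unique isinv_def)

definition rt :: "nat \<Rightarrow> nat \<Rightarrow> complex" where
  "rt n k = exp (2 * of_real pi * \<i> * of_nat k / of_nat n)"

lemma rt_pow: "n \<ge> 1 \<Longrightarrow> rt n k ^ n = 1"
  unfolding rt_def using complex_root_unity by simp

lemma rt_norm [simp]: "cmod (rt n k) = 1"
  unfolding rt_def by (simp add: norm_exp_eq_Re)

lemma rt_pow_swap: "rt n k ^ m = rt n m ^ k"
proof -
  have "rt n k ^ m = exp (of_nat m * (2 * of_real pi * \<i> * of_nat k / of_nat n))"
    unfolding rt_def by (simp only: exp_of_nat_mult)
  also have "\<dots> = exp (of_nat k * (2 * of_real pi * \<i> * of_nat m / of_nat n))"
    by (simp add: algebra_simps)
  also have "\<dots> = rt n m ^ k" unfolding rt_def by (simp only: exp_of_nat_mult)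
  finally show ?thesis .
qed

lemma rt_sum: assumes "n \<ge> 1" "m < n"
  shows "(\<Sum>k<n. rt n k ^ m) = (if m = 0 then of_nat n else 0)"
proof (cases "m = 0")
  case False
  have ne: "rt n m \<noteq> 1" unfolding rt_def
    using complex_root_unity_eq_1[OF assms(1), of m] False assms(2)
    by (simp add: nat_dvd_not_less)
  have "(\<Sum>k<n. rt n k ^ m) = (\<Sum>k<n. rt n m ^ k)" by (simp add: rt_pow_swap)
  also have "\<dots> = 0" using ne rt_pow[OF assms(1), of m] by (simp add: sum_gp_strict)
  finally show ?thesis using False by simp
qed simp

context cstar
begin

lemma avg_inv:
  assumes n: "n \<ge> 1" and inv: "\<And>k. k < n \<Longrightarrow>
      (1 - sc (of_real r * rt n k) x) * F k = 1 \<and> F k * (1 - sc (of_real r * rt n k) x) = 1"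
  shows "(1 - (scaleR r x) ^ n) * scaleR (1 / real n) (\<Sum>k<n. F k) = 1 \<and>
         scaleR (1 / real n) (\<Sum>k<n. F k) * (1 - (scaleR r x) ^ n) = 1"
proof -
  define z where "z k = sc (of_real r * rt n k) x" for k
  define G where "G k = (\<Sum>m<n. z k ^ m)" for k
  have zn: "z k ^ n = (scaleR r x) ^ n" for k
    unfolding z_def sc_power using rt_pow[OF n, of k]
    by (simp add: power_mult_distrib sc_real[of "r^n", symmetric] scaleR_power)
  have FG: "F k * (1 - (scaleR r x) ^ n) = G k" "(1 - (scaleR r x) ^ n) * F k = G k" if "k < n" for k
  proof -
    have "F k * (1 - (scaleR r x) ^ n) = (F k * (1 - z k)) * G k"
      unfolding G_def geo_left mult.assoc zn ..
    thus "F k * (1 - (scaleR r x) ^ n) = G k" using inv[OF that] unfolding z_def by simp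
    have "(1 - (scaleR r x) ^ n) * F k = G k * ((1 - z k) * F k)"
      unfolding G_def mult.assoc[symmetric] geo_right zn ..
    thus "(1 - (scaleR r x) ^ n) * F k = G k" using inv[OF that] unfolding z_def by simp
  qed
  have nn: "scaleR (1 / real n) (of_nat n :: 'a) = 1"
  proof -
    have "(of_nat n :: 'a) = scaleR (real n) 1" by (simp add: scaleR_conv_of_real)
    thus ?thesis using n by simp
  qed
  have sumG: "(\<Sum>k<n. G k) = of_nat n"
  proof -
    have "(\<Sum>k<n. G k) = (\<Sum>m<n. \<Sum>k<n. sc ((of_real r * rt n k) ^ m) (x ^ m))"
      unfolding G_def z_def sc_power by (rule sum.swap)
    also have "\<dots> = (\<Sum>m<n. sc (of_real r ^ m * (\<Sum>k<n. rt n k ^ m)) (x ^ m))"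
      by (simp add: sc_sum_left power_mult_distrib sum_distrib_left)
    also have "\<dots> = (\<Sum>m<n. if m = 0 then sc (of_nat n) 1 else 0)"
      by (rule sum.cong) (simp_all add: rt_sum[OF n])
    also have "\<dots> = sc (of_nat n) 1" using n by (simp add: sum.delta)
    finally show ?thesis by (simp add: sc_of_nat)
  qed
  have "scaleR (1 / real n) (\<Sum>k<n. F k) * (1 - (scaleR r x) ^ n)
        = scaleR (1 / real n) (\<Sum>k<n. F k * (1 - (scaleR r x) ^ n))"
    by (simp add: sum_distrib_right)
  also have "\<dots> = scaleR (1 / real n) (\<Sum>k<n. G k)" using FG by simp
  also have "\<dots> = 1" by (simp add: sumG nn)
  finally have 1: "scaleR (1 / real n) (\<Sum>k<n. F k) * (1 - (scaleR r x) ^ n) = 1" .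
  have "(1 - (scaleR r x) ^ n) * scaleR (1 / real n) (\<Sum>k<n. F k)
        = scaleR (1 / real n) (\<Sum>k<n. (1 - (scaleR r x) ^ n) * F k)"
    by (simp add: sum_distrib_left)
  also have "\<dots> = scaleR (1 / real n) (\<Sum>k<n. G k)" using FG by simp
  also have "\<dots> = 1" by (simp add: sumG nn)
  finally show ?thesis using 1 by simp
qed

end

context cstar
begin

lemma rickart:
  assumes inv: "\<And>l. cmod l \<le> 1 \<Longrightarrow> isinv (1 - sc l x)"
  shows "\<exists>M. \<forall>n. norm (x ^ n) \<le> M"
proof -
  define f where "f l = ainv (1 - sc l x)" for l
  have finv: "(1 - sc l x) * f l = 1 \<and> f l * (1 - sc l x) = 1" if "cmod l \<le> 1" for l
    unfolding f_def using ainv[OF inv[OF that]] .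
  have cont: "continuous_on (cball 0 1) f"
    unfolding continuous_on_iff
  proof (intro ballI allI impI)
    fix l0 :: complex and e :: real
    assume l0: "l0 \<in> cball 0 1" and e: "0 < e"
    define K where "K = norm (f l0)"
    define d where "d = min (1 / (2 * (K + 1) * (norm x + 1))) (e / (2 * (K^2 + 1) * (norm x + 1)))"
    have K0: "K \<ge> 0" unfolding K_def by simp
    have p1: "0 < 2 * (K + 1) * (norm x + 1)" using K0 by (intro mult_pos_pos) (auto simp: add_nonneg_pos)
    have p2: "0 < 2 * (K^2 + 1) * (norm x + 1)" by (intro mult_pos_pos) (auto simp: add_nonneg_pos)
    have d0: "d > 0" unfolding d_def using p1 p2 e by simp
    show "\<exists>d>0. \<forall>l\<in>cball 0 1. dist l l0 < d \<longrightarrow> dist (f l) (f l0) < e"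
    proof (intro exI conjI ballI impI, rule d0)
      fix l assume l: "l \<in> cball 0 1" and dl: "dist l l0 < d"
      let ?u = "1 - sc l0 x" and ?w = "1 - sc l x"
      have wu: "?w - ?u = sc (l0 - l) x" by (simp add: sc_diff_left)
      have nwu: "norm (?w - ?u) = cmod (l - l0) * norm x"
        unfolding wu norm_sc by (simp add: norm_minus_commute)
      have cl: "cmod (l - l0) < d" using dl by (simp add: dist_norm)
      have nwu_le: "norm (?w - ?u) \<le> d * norm x"
        unfolding nwu using cl by (simp add: mult_right_mono)
      have "d * norm x * K \<le> 1 / (2 * (K + 1) * (norm x + 1)) * norm x * K"
        using K0 by (intro mult_right_mono) (auto simp: d_def)
      also have "\<dots> \<le> 1/2"
      proof -
        have "norm x * K \<le> (K + 1) * (norm x + 1)" using K0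
          by (simp add: algebra_simps)
        thus ?thesis using K0 p1 by (simp add: divide_simps algebra_simps)
      qed
      finally have sm: "norm (?w - ?u) * norm (f l0) \<le> 1/2"
        using nwu_le K0 unfolding K_def
        by (meson dual_order.trans mult_right_mono norm_ge_zero)
      have l0': "cmod l0 \<le> 1" using l0 by simp
      have l': "cmod l \<le> 1" using l by simp
      obtain v' where v': "?w * v' = 1" "v' * ?w = 1"
        "norm (v' - f l0) \<le> 2 * norm (f l0) ^ 2 * norm (?w - ?u)"
        using inv_perturb[of ?u "f l0" ?w] finv[OF l0'] sm by blast
      have "v' = f l" using inv_unique[OF v'(1)] finv[OF l'] by simp
      hence "dist (f l) (f l0) \<le> 2 * K^2 * norm (?w - ?u)" using v'(3) by (simp add: dist_norm K_def)
      also have "\<dots> \<le> 2 * K^2 * (d * norm x)" using nwu_le by (simp add: mult_left_mono)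
      also have "\<dots> \<le> 2 * K^2 * (e / (2 * (K^2 + 1) * (norm x + 1)) * norm x)"
        by (intro mult_left_mono mult_right_mono) (auto simp: d_def)
      also have "\<dots> < e"
      proof -
        have "K^2 * norm x < (K^2 + 1) * (norm x + 1)"
          by (simp add: algebra_simps) (smt (verit) mult_nonneg_nonneg norm_ge_zero zero_le_power2)
        hence "2 * K^2 * norm x < 2 * (K^2 + 1) * (norm x + 1)" by linarith
        hence q: "2 * K^2 * norm x / (2 * (K^2 + 1) * (norm x + 1)) < 1" using p2 by simp
        have "2 * K^2 * (e / (2 * (K^2 + 1) * (norm x + 1)) * norm x)
              = e * (2 * K^2 * norm x / (2 * (K^2 + 1) * (norm x + 1)))" by simp
        also have "\<dots> < e * 1" using q e by (intro mult_strict_left_mono) auto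
        finally show ?thesis by simp
      qed
      finally show "dist (f l) (f l0) < e" .
    qed
  qed
  have "uniformly_continuous_on (cball 0 1) f"
    by (rule compact_uniformly_continuous[OF cont compact_cball])
  then obtain \<delta> where \<delta>: "\<delta> > 0"
    "\<And>l m. l \<in> cball 0 1 \<Longrightarrow> m \<in> cball 0 1 \<Longrightarrow> dist m l < \<delta> \<Longrightarrow> dist (f m) (f l) < 1/4"
    unfolding uniformly_continuous_on_def by (metis zero_less_divide_1_iff zero_less_numeral)
  define Good where "Good r \<longleftrightarrow> (\<exists>M. \<forall>n. norm ((scaleR r x) ^ n) \<le> M)" for r
  have npow: "norm ((scaleR r x) ^ n) = \<bar>r\<bar> ^ n * norm (x ^ n)" for r n
    by (simp add: scaleR_power power_abs)
  have zero_lim: "(\<lambda>n. (scaleR r1 x) ^ n) \<longlonglongrightarrow> 0" if G: "Good r" and r1: "0 \<le> r1" "r1 < r" for r r1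
  proof -
    obtain M where M: "\<And>n. norm ((scaleR r x) ^ n) \<le> M" using G unfolding Good_def by blast
    have r0: "r > 0" using r1 by simp
    have bnd: "norm ((scaleR r1 x) ^ n) \<le> (r1 / r) ^ n * M" for n
    proof -
      have "norm ((scaleR r1 x) ^ n) = (r1 / r) ^ n * (r ^ n * norm (x ^ n))"
        using r1 r0 by (simp add: npow power_divide)
      also have "\<dots> = (r1 / r) ^ n * norm ((scaleR r x) ^ n)" using r0 by (simp add: npow)
      also have "\<dots> \<le> (r1 / r) ^ n * M" using M r1 r0 by (simp add: mult_left_mono)
      finally show ?thesis .
    qed
    have lim: "(\<lambda>n. (r1 / r) ^ n * M) \<longlonglongrightarrow> 0"
      using r1 r0 by (intro tendsto_mult_left_zero LIMSEQ_power_zero) auto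
    have ev: "eventually (\<lambda>n. norm ((scaleR r1 x) ^ n) \<le> (r1 / r) ^ n * M) sequentially"
      by (rule always_eventually) (use bnd in blast)
    show ?thesis by (rule Lim_null_comparison[OF ev lim])
  qed
  have step: "Good (min 1 (r + \<delta>/2))" if G: "Good r" and r: "0 < r" "r \<le> 1" for r
  proof -
    define r1 where "r1 = max 0 (r - \<delta>/4)"
    define r2 where "r2 = min 1 (r + \<delta>/2)"
    have r1: "0 \<le> r1" "r1 < r" "r1 \<le> 1" using r \<delta> unfolding r1_def by auto
    have r2: "0 \<le> r2" "r2 \<le> 1" using r \<delta> unfolding r2_def by auto
    have r12: "\<bar>r2 - r1\<bar> < \<delta>" using r \<delta> unfolding r1_def r2_def by auto
    have "(\<lambda>n. (scaleR r1 x) ^ n) \<longlonglongrightarrow> 0" by (rule zero_lim[OF G r1(1,2)])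
    hence "(\<lambda>n. norm ((scaleR r1 x) ^ n)) \<longlonglongrightarrow> 0" by (rule tendsto_norm_zero)
    hence "eventually (\<lambda>n. norm ((scaleR r1 x) ^ n) < 1/8) sequentially"
      by (rule order_tendstoD(2)) simp
    then obtain N where N: "\<And>n. n \<ge> N \<Longrightarrow> norm ((scaleR r1 x) ^ n) < 1/8"
      unfolding eventually_sequentially by blast
    define N' where "N' = max N 1"
    have big: "norm ((scaleR r2 x) ^ n) \<le> 1" if n: "n \<ge> N'" for n
    proof -
      have n1: "n \<ge> 1" "n \<ge> N" using n unfolding N'_def by auto
      define A where "A r' = scaleR (1 / real n) (\<Sum>k<n. f (of_real r' * rt n k))" for r'
      have inrt: "cmod (of_real r' * rt n k) \<le> 1" if "0 \<le> r'" "r' \<le> 1" for r' k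
        using that by (simp add: norm_mult)
      have AI: "(1 - (scaleR r' x) ^ n) * A r' = 1 \<and> A r' * (1 - (scaleR r' x) ^ n) = 1"
        if "0 \<le> r'" "r' \<le> 1" for r'
        unfolding A_def by (rule avg_inv[OF n1(1)]) (rule finv[OF inrt[OF that]])
      let ?y1 = "(scaleR r1 x) ^ n" and ?y2 = "(scaleR r2 x) ^ n"
      have ny1: "norm ?y1 < 1/8" using N n1 by simp
      have "A r1 = (\<Sum>m. ?y1 ^ m)"
        using inv_unique[of "1 - ?y1" "A r1" "(\<Sum>m. ?y1 ^ m)"] AI[OF r1(1,3)] neumann[of ?y1] ny1 by simp
      hence "norm (A r1 - 1) \<le> norm ?y1 / (1 - norm ?y1)" using neumann[of ?y1] ny1 by simp
      also have "\<dots> \<le> 1/4" using ny1 norm_ge_zero[of ?y1] by (simp add: divide_simps)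
      finally have a1: "norm (A r1 - 1) \<le> 1/4" .
      have "norm (A r2 - A r1) = norm (scaleR (1 / real n) (\<Sum>k<n. f (of_real r2 * rt n k) - f (of_real r1 * rt n k)))"
        unfolding A_def by (simp add: scaleR_diff_right sum_subtractf)
      also have "\<dots> \<le> (1 / real n) * (\<Sum>k<n. norm (f (of_real r2 * rt n k) - f (of_real r1 * rt n k)))"
        by (simp add: divide_right_mono norm_sum)
      also have "\<dots> \<le> (1 / real n) * (\<Sum>k<n. 1/4)"
      proof (intro mult_left_mono sum_mono less_imp_le)
        fix k assume "k \<in> {..<n}"
        have "dist (f (of_real r2 * rt n k)) (f (of_real r1 * rt n k)) < 1/4"
        proof (rule \<delta>(2))
          show "of_real r1 * rt n k \<in> cball 0 1" using inrt[OF r1(1,3)] by simp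
          show "of_real r2 * rt n k \<in> cball 0 1" using inrt[OF r2] by simp
          have "dist (of_real r2 * rt n k) (of_real r1 * rt n k) = \<bar>r2 - r1\<bar>"
            by (simp add: dist_norm left_diff_distrib[symmetric] norm_mult of_real_diff[symmetric] del: of_real_diff)
          thus "dist (of_real r2 * rt n k) (of_real r1 * rt n k) < \<delta>" using r12 by simp
        qed
        thus "norm (f (of_real r2 * rt n k) - f (of_real r1 * rt n k)) < 1/4" by (simp add: dist_norm)
      qed (use n1 in simp)
      also have "\<dots> = 1/4" using n1 by simp
      finally have a2: "norm (A r2 - A r1) \<le> 1/4" .
      have "1 - A r2 = - ((A r2 - A r1) + (A r1 - 1))" by simp
      hence "norm (1 - A r2) = norm ((A r2 - A r1) + (A r1 - 1))" by (simp only: norm_minus_cancel)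
      hence "norm (1 - A r2) \<le> norm (A r2 - A r1) + norm (A r1 - 1)"
        using norm_triangle_ineq by metis
      hence ng: "norm (1 - A r2) \<le> 1/2" using a1 a2 by simp
      have ng': "norm (1 - A r2) < 1" using ng by simp
      define S where "S = (\<Sum>m. (1 - A r2) ^ m)"
      have N2: "(1 - (1 - A r2)) * S = 1 \<and> S * (1 - (1 - A r2)) = 1 \<and>
         norm (S - 1) \<le> norm (1 - A r2) / (1 - norm (1 - A r2))"
        unfolding S_def by (rule neumann[OF ng'])
      have AS: "A r2 * S = 1" using N2 by simp
      have "S = 1 - ?y2" by (rule inv_unique[OF AS]) (use AI[OF r2] in blast)
      hence "norm ?y2 = norm (S - 1)" by (simp add: norm_minus_commute)
      also have "\<dots> \<le> norm (1 - A r2) / (1 - norm (1 - A r2))" using N2 by blast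
      also have "\<dots> \<le> 1" using ng by (simp add: divide_simps)
      finally show ?thesis .
    qed
    have "norm ((scaleR r2 x) ^ n) \<le> 1 + (\<Sum>m<N'. norm ((scaleR r2 x) ^ m))" for n
    proof (cases "n \<ge> N'")
      case True
      have "0 \<le> (\<Sum>m<N'. norm ((scaleR r2 x) ^ m))" by (simp add: sum_nonneg)
      thus ?thesis using big[OF True] by linarith
    next
      case False
      hence "norm ((scaleR r2 x) ^ n) \<le> (\<Sum>m<N'. norm ((scaleR r2 x) ^ m))"
        by (intro member_le_sum) auto
      thus ?thesis by simp
    qed
    thus ?thesis unfolding Good_def r2_def by blast
  qed
  define r0 where "r0 = min 1 (1 / (norm x + 1))"
  have nx1: "0 < norm x + 1" using norm_ge_zero[of x] by linarith
  have r0: "0 < r0" "r0 \<le> 1" unfolding r0_def using nx1 by auto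
  have G0: "Good r0"
  proof -
    have "norm (scaleR r0 x) \<le> 1"
    proof -
      have "norm (scaleR r0 x) = r0 * norm x" using r0 by simp
      also have "\<dots> \<le> (1 / (norm x + 1)) * norm x" unfolding r0_def
        by (intro mult_right_mono) auto
      also have "\<dots> \<le> 1" using nx1 by (simp add: divide_simps)
      finally show ?thesis .
    qed
    hence "norm ((scaleR r0 x) ^ n) \<le> 1" for n
      by (meson norm_power_ineq order_trans power_le_one norm_ge_zero)
    thus ?thesis unfolding Good_def by blast
  qed
  have Gk: "Good (min 1 (r0 + real k * \<delta>/2))" for k
  proof (induction k)
    case 0 thus ?case using G0 r0 by simp
  next
    case (Suc k)
    have pos: "0 < min 1 (r0 + real k * \<delta>/2)" using r0(1,2) \<delta>(1) by (simp add: add_pos_nonneg)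
    have "Good (min 1 (min 1 (r0 + real k * \<delta>/2) + \<delta>/2))" by (rule step[OF Suc pos]) simp
    moreover have "min 1 (min 1 (r0 + real k * \<delta>/2) + \<delta>/2) = min 1 (r0 + real (Suc k) * \<delta>/2)"
    proof -
      have e: "r0 + real (Suc k) * \<delta>/2 = (r0 + real k * \<delta>/2) + \<delta>/2" by (simp add: algebra_simps)
      show ?thesis unfolding e using \<delta>(1) by (cases "r0 + real k * \<delta>/2 \<le> 1") (simp_all add: min_def)
    qed
    ultimately show ?case by simp
  qed
  obtain k :: nat where k: "2 / \<delta> < real k" using reals_Archimedean2 by blast
  have "real k * \<delta> / 2 \<ge> 1" using k \<delta> by (simp add: divide_simps mult.commute)
  hence "min 1 (r0 + real k * \<delta>/2) = 1" using r0 by simp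
  hence "Good 1" using Gk[of k] by simp
  thus ?thesis unfolding Good_def by simp
qed

lemma norm_le_spec:
  assumes h: "star h = h" and s: "0 \<le> s" and sp: "\<And>z. z \<in> spec h \<Longrightarrow> cmod z \<le> s"
  shows "norm h \<le> s"
proof (rule ccontr)
  assume "\<not> norm h \<le> s"
  hence hs: "s < norm h" by simp
  define \<rho> where "\<rho> = (s + norm h) / 2"
  have \<rho>: "s < \<rho>" "\<rho> < norm h" "0 < \<rho>" using hs s unfolding \<rho>_def by auto
  define x where "x = scaleR (1 / \<rho>) h"
  have inv: "isinv (1 - sc l x)" if l: "cmod l \<le> 1" for l
  proof (cases "l = 0")
    case True thus ?thesis by simp
  next
    case False
    have "cmod (complex_of_real \<rho> / l) = \<rho> / cmod l" using \<rho> by (simp add: norm_divide)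
    also have "\<dots> \<ge> \<rho>" using l False \<rho> by (simp add: divide_simps)
    finally have "complex_of_real \<rho> / l \<notin> spec h" using sp \<rho> by force
    hence i1: "isinv (h - sc (complex_of_real \<rho> / l) 1)" using spec_iff by blast
    have "isinv (sc (- l / complex_of_real \<rho>) 1 * (h - sc (complex_of_real \<rho> / l) 1))"
      using isinv_mult[OF isinv_sc1 i1] False \<rho> by simp
    moreover have "sc (- l / complex_of_real \<rho>) 1 * (h - sc (complex_of_real \<rho> / l) 1) = 1 - sc l x"
    proof -
      have "sc (- l / complex_of_real \<rho>) 1 * (h - sc (complex_of_real \<rho> / l) 1)
          = sc (- l / complex_of_real \<rho>) h - sc ((- l / complex_of_real \<rho>) * (complex_of_real \<rho> / l)) 1"
        by (simp add: right_diff_distrib sc1_mult sc_sc[symmetric])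
      also have "(- l / complex_of_real \<rho>) * (complex_of_real \<rho> / l) = -1" using False \<rho> by simp
      also have "sc (- l / complex_of_real \<rho>) h = - sc l x"
        unfolding x_def sc_scaleR scaleR_sc by (simp add: sc_minus_left[symmetric] divide_inverse mult.commute)
      finally show ?thesis by (simp add: sc_minus_left)
    qed
    ultimately show ?thesis by simp
  qed
  obtain M where M: "\<And>n. norm (x ^ n) \<le> M" using rickart[OF inv] by blast
  have xs: "star x = x" unfolding x_def by (simp add: star_scaleR h)
  have nx: "norm x = norm h / \<rho>" unfolding x_def using \<rho> by simp
  have gt: "norm x > 1" unfolding nx using \<rho> by simp
  define \<epsilon> where "\<epsilon> = norm x - 1"
  have \<epsilon>: "\<epsilon> > 0" using gt unfolding \<epsilon>_def by simp
  obtain m :: nat where m: "M / \<epsilon> < real m" using reals_Archimedean2 by blast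
  have "m < 2 ^ m" by (rule less_exp)
  hence "real m \<le> 2 ^ m" by (metis less_imp_le of_nat_le_iff of_nat_numeral of_nat_power)
  have "1 + real (2 ^ m) * \<epsilon> \<le> (1 + \<epsilon>) ^ (2 ^ m)" using \<epsilon> Bernoulli_inequality[of \<epsilon> "2^m"] by simp
  also have "(1 + \<epsilon>) ^ (2 ^ m) = norm (x ^ (2 ^ m))" using selfadj_norm_pow2[OF xs] unfolding \<epsilon>_def by simp
  also have "\<dots> \<le> M" by (rule M)
  finally have "real (2 ^ m) * \<epsilon> < M" by simp
  moreover have "M < real m * \<epsilon>" using m \<epsilon> by (simp add: divide_simps)
  moreover have "real m * \<epsilon> \<le> real (2 ^ m) * \<epsilon>" using \<open>real m \<le> 2 ^ m\<close> \<epsilon> by (simp add: mult_right_mono)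
  ultimately show False by simp
qed

end

lemma isinv_power: "isinv a \<Longrightarrow> isinv (a ^ n)"
  by (induction n) (simp_all add: isinv_mult)

lemma isinv_uminus_iff: "isinv (- (x::'a::ring_1)) \<longleftrightarrow> isinv x"
  using isinv_uminus[of x] isinv_uminus[of "-x"] by auto

context cstar
begin

abbreviation pos :: "'a \<Rightarrow> bool" where "pos a \<equiv> cpos sc star a"

lemma pos_def': "pos a \<longleftrightarrow> star a = a \<and> (\<forall>z\<in>spec a. Im z = 0 \<and> 0 \<le> Re z)"
  unfolding cpos_def by auto

lemma spec_shift: "z \<in> spec (scaleR t 1 - p) \<longleftrightarrow> (of_real t - z) \<in> spec p"
proof -
  have e1: "sc (of_real t - z) 1 = scaleR t 1 - sc z 1" by (simp add: sc_diff_left sc_real)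
  have eq: "(scaleR t 1 - p) - sc z 1 = - (p - sc (of_real t - z) 1)"
    unfolding e1 by (simp add: algebra_simps)
  show ?thesis unfolding spec_iff eq isinv_uminus_iff ..
qed

lemma pos_zero: "pos 0"
  unfolding pos_def'
proof (intro conjI ballI)
  fix z assume z: "z \<in> spec 0"
  have "z = 0"
  proof (rule ccontr)
    assume "z \<noteq> 0"
    hence "isinv (0 - sc z 1)" using isinv_uminus[OF isinv_sc1[OF \<open>z \<noteq> 0\<close>]] by simp
    thus False using z spec_iff by blast
  qed
  thus "Im z = 0" "0 \<le> Re z" by simp_all
qed simp

lemma posP:
  assumes p: "star p = p" and t: "norm p \<le> t"
  shows "pos p \<longleftrightarrow> norm (scaleR t 1 - p) \<le> t"
proof
  have t0: "0 \<le> t" using t norm_ge_zero order_trans by blast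
  assume P: "pos p"
  show "norm (scaleR t 1 - p) \<le> t"
  proof (rule norm_le_spec[OF _ t0])
    show "star (scaleR t 1 - p) = scaleR t 1 - p" by (simp add: star_diff star_scaleR p)
    fix z assume "z \<in> spec (scaleR t 1 - p)"
    hence w: "of_real t - z \<in> spec p" by (simp add: spec_shift)
    hence "Im (of_real t - z) = 0" "0 \<le> Re (of_real t - z)" using P unfolding pos_def' by auto
    moreover have "cmod (of_real t - z) \<le> t" using spec_le_norm[OF w] t by simp
    ultimately have "Im z = 0" "0 \<le> Re z" "Re z \<le> t"
      by (auto simp: cmod_def)
    thus "cmod z \<le> t" by (simp add: cmod_def)
  qed
next
  assume N: "norm (scaleR t 1 - p) \<le> t"
  show "pos p" unfolding pos_def'
  proof (intro conjI ballI)
    fix z assume z: "z \<in> spec p"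
    show im: "Im z = 0" by (rule selfadj_spec_real[OF p z])
    have "of_real t - (of_real t - z) = z" by simp
    hence "of_real t - z \<in> spec (scaleR t 1 - p)" using z by (simp add: spec_shift)
    hence "cmod (of_real t - z) \<le> t" using spec_le_norm N by fastforce
    thus "0 \<le> Re z" using im by (simp add: cmod_def)
  qed (rule p)
qed

lemma pos_selfadj: "pos a \<Longrightarrow> star a = a" unfolding cpos_def by simp

lemma pos_add: assumes a: "pos a" and b: "pos b" shows "pos (a + b)"
proof -
  have sa: "star (a + b) = a + b" using a b by (simp add: pos_selfadj star_add)
  have 1: "norm (scaleR (norm a) 1 - a) \<le> norm a" using posP[OF pos_selfadj[OF a]] a by simp
  have 2: "norm (scaleR (norm b) 1 - b) \<le> norm b" using posP[OF pos_selfadj[OF b]] b by simp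
  have eq: "scaleR (norm a + norm b) 1 - (a + b) = (scaleR (norm a) 1 - a) + (scaleR (norm b) 1 - b)"
    by (simp add: algebra_simps)
  have "norm (scaleR (norm a + norm b) 1 - (a + b)) \<le> norm a + norm b"
    unfolding eq using 1 2 norm_triangle_ineq[of "scaleR (norm a) 1 - a" "scaleR (norm b) 1 - b"] by linarith
  moreover have "norm (a + b) \<le> norm a + norm b" by (rule norm_triangle_ineq)
  ultimately show ?thesis using posP[OF sa] by blast
qed

lemma pos_norm_mono: assumes e: "pos e" and f: "pos f" shows "norm e \<le> norm (e + f)"
proof -
  define g where "g = e + f"
  define T where "T = norm g"
  have T0: "0 \<le> T" unfolding T_def by simp
  have gp: "pos g" unfolding g_def by (rule pos_add[OF e f])
  have gs: "star g = g" by (rule pos_selfadj[OF gp])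
  have "norm (scaleR T 1 - g) \<le> T" using posP[OF gs] gp unfolding T_def by simp
  moreover have "norm (scaleR T 1 - (scaleR T 1 - g)) \<le> T" unfolding T_def by simp
  moreover have "star (scaleR T 1 - g) = scaleR T 1 - g" by (simp add: star_diff star_scaleR gs)
  ultimately have "pos (scaleR T 1 - g)" using posP by blast
  hence "pos ((scaleR T 1 - g) + f)" using pos_add f by blast
  hence Te: "pos (scaleR T 1 - e)" unfolding g_def by (simp add: algebra_simps)
  have "norm e \<le> T"
  proof (rule norm_le_spec[OF pos_selfadj[OF e] T0])
    fix z assume z: "z \<in> spec e"
    have "Im z = 0" "0 \<le> Re z" using e z unfolding pos_def' by auto
    moreover have "of_real T - (of_real T - z) = z" by simp
    hence "of_real T - z \<in> spec (scaleR T 1 - e)" using z by (simp add: spec_shift)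
    hence "0 \<le> Re (of_real T - z)" using Te unfolding pos_def' by blast
    ultimately show "cmod z \<le> T" by (simp add: cmod_def)
  qed
  thus ?thesis unfolding T_def g_def .
qed

definition peval :: "'a \<Rightarrow> complex poly \<Rightarrow> 'a" where
  "peval x p = fold_coeffs (\<lambda>a acc. sc a 1 + x * acc) p 0"

lemma peval_0 [simp]: "peval x 0 = 0" unfolding peval_def by simp

lemma peval_pCons [simp]: "peval x (pCons a p) = sc a 1 + x * peval x p"
proof (cases "a = 0 \<and> p = 0")
  case True thus ?thesis by simp
next
  case False
  hence "fold_coeffs (\<lambda>a acc. sc a 1 + x * acc) (pCons a p) =
         (\<lambda>acc. sc a 1 + x * acc) \<circ> fold_coeffs (\<lambda>a acc. sc a 1 + x * acc) p"
    by auto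
  thus ?thesis unfolding peval_def by simp
qed

lemma peval_add: "peval x (p + q) = peval x p + peval x q"
  by (induction p q rule: poly_induct2) (simp_all add: sc_add_left distrib_left)

lemma peval_smult: "peval x (smult c p) = sc c (peval x p)"
  by (induction p) (simp_all add: sc_add_right sc_mult_right sc_sc)

lemma peval_mult: "peval x (p * q) = peval x p * peval x q"
  by (induction p) (simp_all add: peval_add peval_smult distrib_right sc1_mult mult.assoc)

lemma peval_diff: "peval x (p - q) = peval x p - peval x q"
  using peval_add[of x "p - q" q] by (simp add: eq_diff_eq)

lemma peval_one [simp]: "peval x 1 = 1" by (simp add: one_pCons)

lemma peval_power: "peval x (p ^ n) = (peval x p) ^ n"
  by (induction n) (simp_all add: peval_mult)

lemma peval_const: "peval x [:c:] = sc c 1" by simp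

lemma peval_monom1: "peval x (monom 1 n) = x ^ n"
  by (induction n) (simp_all add: monom_0 monom_Suc)

lemma peval_linear: "peval x [:- z, 1:] = x - sc z 1"
  by (simp add: sc_minus_left)

lemma peval_comm: "x * peval x p = peval x p * x"
  by (induction p) (simp_all add: distrib_left distrib_right sc1_comm, metis mult.assoc)

lemma peval_star:
  assumes x: "star x = x" and r: "\<forall>i. cnj (coeff p i) = coeff p i"
  shows "star (peval x p) = peval x p"
  using r
proof (induction p)
  case (pCons a p)
  have a: "cnj a = a" using pCons(3)[rule_format, of 0] by simp
  have "\<forall>i. cnj (coeff p i) = coeff p i" using pCons(3) by (metis coeff_pCons_Suc)
  hence IH: "star (peval x p) = peval x p" by (rule pCons(2))
  show ?case by (simp add: star_add star_sc1 a star_mult IH x peval_comm)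
qed simp

lemma peval_prod_isinv:
  "finite S \<Longrightarrow> (\<And>z. z \<in> S \<Longrightarrow> isinv (peval x (g z))) \<Longrightarrow> isinv (peval x (\<Prod>z\<in>S. g z))"
  by (induction S rule: finite_induct) (simp_all add: peval_mult isinv_mult)

lemma spec_map:
  assumes deg: "degree p \<ge> 1" and mu: "\<mu> \<in> spec (peval x p)"
  shows "\<exists>t\<in>spec x. poly p t = \<mu>"
proof (rule ccontr)
  assume nt: "\<not> (\<exists>t\<in>spec x. poly p t = \<mu>)"
  define P where "P = p - [:\<mu>:]"
  have degP: "degree P = degree p"
  proof -
    have "P = p + [:-\<mu>:]" unfolding P_def by simp
    moreover have "degree [:-\<mu>:] < degree p" using deg by simp
    ultimately show ?thesis using degree_add_eq_left by metis
  qed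
  hence P0: "P \<noteq> 0" using deg by auto
  hence lc: "lead_coeff P \<noteq> 0" by simp
  have fin: "finite {z. poly P z = 0}" using poly_roots_finite[OF P0] .
  have "isinv (peval x (\<Prod>z | poly P z = 0. [:-z, 1:] ^ order z P))"
  proof (rule peval_prod_isinv[OF fin])
    fix z assume "z \<in> {z. poly P z = 0}"
    hence "poly p z = \<mu>" unfolding P_def by simp
    hence "z \<notin> spec x" using nt by blast
    hence "isinv (x - sc z 1)" using spec_iff by blast
    thus "isinv (peval x ([:- z, 1:] ^ order z P))"
      unfolding peval_power peval_linear by (rule isinv_power)
  qed
  hence "isinv (sc (lead_coeff P) 1 * peval x (\<Prod>z | poly P z = 0. [:-z, 1:] ^ order z P))"
    using isinv_mult isinv_sc1[OF lc] by blast
  also have "sc (lead_coeff P) 1 * peval x (\<Prod>z | poly P z = 0. [:-z, 1:] ^ order z P) = peval x P"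
    using complex_poly_decompose[of P] by (metis peval_smult sc1_mult)
  also have "peval x P = peval x p - sc \<mu> 1" unfolding P_def by (simp add: peval_diff)
  finally show False using mu spec_iff by blast
qed

lemma peval_norm_le:
  assumes x: "star x = x" and r: "\<forall>i. cnj (coeff p i) = coeff p i" and deg: "degree p \<ge> 1"
    and s: "0 \<le> s" and b: "\<And>t. t \<in> spec x \<Longrightarrow> cmod (poly p t) \<le> s"
  shows "norm (peval x p) \<le> s"
proof (rule norm_le_spec[OF peval_star[OF x r] s])
  fix z assume "z \<in> spec (peval x p)"
  then obtain t where "t \<in> spec x" "poly p t = z" using spec_map[OF deg] by blast
  thus "cmod z \<le> s" using b by blast
qed

end

definition alpha :: "nat \<Rightarrow> real" where
  "alpha k = (-1) ^ k * ((-1/2::real) gchoose k)"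

lemma gch_half_bound: "\<bar>(-1/2::real) gchoose k\<bar> \<le> 1"
proof (induction k)
  case (Suc k)
  have "of_nat (Suc k) * ((-1/2::real) gchoose Suc k) = (-1/2 - of_nat k) * ((-1/2) gchoose k)"
    using gbinomial_mult_1[of "-1/2::real" k] by (simp add: algebra_simps)
  hence "((-1/2::real) gchoose Suc k) = (-1/2 - of_nat k) / of_nat (Suc k) * ((-1/2) gchoose k)"
    by (simp add: field_simps del: of_nat_Suc)
  hence "\<bar>(-1/2::real) gchoose Suc k\<bar> = \<bar>(-1/2 - of_nat k) / of_nat (Suc k)\<bar> * \<bar>(-1/2) gchoose k\<bar>"
    by (simp add: abs_mult)
  also have "\<dots> \<le> 1 * 1"
  proof (rule mult_mono)
    show "\<bar>(-1/2 - real k) / real (Suc k)\<bar> \<le> 1" by (simp add: divide_simps)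
    show "\<bar>(-1/2::real) gchoose k\<bar> \<le> 1" by (rule Suc.IH)
  qed auto
  finally show ?case by simp
qed simp

lemma alpha_bound: "\<bar>alpha k\<bar> \<le> 1"
  unfolding alpha_def abs_mult power_abs using gch_half_bound[of k] by simp

lemma alpha_conv: "(\<Sum>i\<le>n. alpha i * alpha (n - i)) = 1"
proof -
  have "(\<Sum>i\<le>n. alpha i * alpha (n - i)) = (\<Sum>i\<le>n. (-1) ^ n * (((-1/2::real) gchoose i) * ((-1/2) gchoose (n - i))))"
  proof (rule sum.cong)
    fix i assume "i \<in> {..n}"
    hence "(-1::real) ^ i * (-1) ^ (n - i) = (-1) ^ n" by (simp add: power_add[symmetric])
    thus "alpha i * alpha (n - i) = (-1) ^ n * (((-1/2::real) gchoose i) * ((-1/2) gchoose (n - i)))"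
      unfolding alpha_def by (metis (no_types, lifting) mult.assoc mult.left_commute)
  qed simp
  also have "\<dots> = (-1) ^ n * (\<Sum>i=0..n. ((-1/2::real) gchoose i) * ((-1/2) gchoose (n - i)))"
    by (simp add: sum_distrib_left atMost_atLeast0)
  also have "\<dots> = (-1) ^ n * ((-1::real) gchoose n)" by (simp add: gbinomial_Vandermonde)
  also have "((-1::real) gchoose n) = (-1) ^ n"
    using gbinomial_minus[of "1::real" n] by (simp add: binomial_gbinomial[symmetric])
  finally show ?thesis by (simp add: power_mult_distrib[symmetric])
qed

context cstar
begin

lemma sqrt_series:
  assumes v: "norm v < 1"
  defines "r \<equiv> (\<Sum>k. scaleR (alpha k) (v ^ k))"
  shows "r * r * (1 - v) = 1" "\<And>w. w * v = v * w \<Longrightarrow> w * r = r * w"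
    "star v = v \<Longrightarrow> star r = r"
proof -
  have sg: "summable (\<lambda>k. norm v ^ k)" using v by (simp add: summable_geometric)
  have bnd: "norm (scaleR (alpha k) (v ^ k)) \<le> norm v ^ k" for k
  proof -
    have "norm (scaleR (alpha k) (v ^ k)) = \<bar>alpha k\<bar> * norm (v ^ k)" by simp
    also have "\<dots> \<le> 1 * norm v ^ k"
      by (intro mult_mono alpha_bound norm_power_ineq) auto
    finally show ?thesis by simp
  qed
  have sa: "summable (\<lambda>k. norm (scaleR (alpha k) (v ^ k)))"
    by (rule summable_comparison_test'[OF sg]) (use bnd in auto)
  hence s: "summable (\<lambda>k. scaleR (alpha k) (v ^ k))" by (rule summable_norm_cancel)
  have "r * r = (\<Sum>k. \<Sum>i\<le>k. scaleR (alpha i) (v ^ i) * scaleR (alpha (k - i)) (v ^ (k - i)))"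
    unfolding r_def by (rule Cauchy_product[OF sa sa])
  also have "\<dots> = (\<Sum>k. v ^ k)"
  proof (rule suminf_cong)
    fix k
    have "(\<Sum>i\<le>k. scaleR (alpha i) (v ^ i) * scaleR (alpha (k - i)) (v ^ (k - i)))
        = (\<Sum>i\<le>k. scaleR (alpha i * alpha (k - i)) (v ^ k))"
    proof (rule sum.cong)
      fix i assume "i \<in> {..k}"
      hence "v ^ i * v ^ (k - i) = v ^ k" by (simp add: power_add[symmetric])
      thus "scaleR (alpha i) (v ^ i) * scaleR (alpha (k - i)) (v ^ (k - i)) = scaleR (alpha i * alpha (k - i)) (v ^ k)"
        by simp
    qed simp
    also have "\<dots> = scaleR (\<Sum>i\<le>k. alpha i * alpha (k - i)) (v ^ k)" by (simp add: scaleR_sum_left)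
    also have "\<dots> = v ^ k" by (simp add: alpha_conv)
    finally show "(\<Sum>i\<le>k. scaleR (alpha i) (v ^ i) * scaleR (alpha (k - i)) (v ^ (k - i))) = v ^ k" .
  qed
  finally have rr: "r * r = (\<Sum>k. v ^ k)" .
  show "r * r * (1 - v) = 1" unfolding rr using neumann[OF v] by simp
  show "w * r = r * w" if w: "w * v = v * w" for w
  proof -
    have wk: "w * v ^ k = v ^ k * w" for k
      by (induction k) (simp_all, metis mult.assoc w)
    have "w * r = (\<Sum>k. w * scaleR (alpha k) (v ^ k))" unfolding r_def by (rule suminf_mult[OF s, symmetric])
    also have "\<dots> = (\<Sum>k. scaleR (alpha k) (v ^ k) * w)" by (simp add: wk)
    also have "\<dots> = r * w" unfolding r_def by (rule suminf_mult2[OF s, symmetric])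
    finally show ?thesis .
  qed
  show "star r = r" if sv: "star v = v"
  proof -
    have "star r = (\<Sum>k. star (scaleR (alpha k) (v ^ k)))"
      unfolding r_def by (rule bounded_linear.suminf[OF bounded_linear_star s])
    also have "\<dots> = r" unfolding r_def by (simp add: star_scaleR star_power sv)
    finally show ?thesis .
  qed
qed

end

context cstar
begin

lemma factor2: "(a - sc z 1) * (a - sc w 1) = a * a - sc (z + w) a + sc (z * w) 1"
proof -
  have "(a - sc z 1) * (a - sc w 1) = a * a - a * sc w 1 - sc z 1 * a + sc z 1 * sc w 1"
    by (simp add: algebra_simps)
  also have "a * sc w 1 = sc w a" by (simp add: mult_sc1)
  also have "sc z 1 * a = sc z a" by (simp add: sc1_mult)
  also have "sc z 1 * sc w 1 = sc (z * w) 1" by (simp add: sc_mult_sc)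
  finally show ?thesis by (simp add: sc_add_left algebra_simps)
qed

lemma factor2_comm: "(a - sc z 1) * (a - sc w 1) = (a - sc w 1) * (a - sc z 1)"
  unfolding factor2 by (simp add: add.commute mult.commute)

lemma spec_gap:
  assumes pa: "pos a" and p1: "pos (a * a - scaleR C a)" and p2: "pos (scaleR D a - a * a)"
    and z: "z \<in> spec a"
  shows "Im z = 0 \<and> 0 \<le> Re z \<and> (Re z = 0 \<or> (C \<le> Re z \<and> Re z \<le> D))"
proof -
  have imz: "Im z = 0" and rez: "0 \<le> Re z" using pa z unfolding pos_def' by auto
  define r where "r = Re z"
  have zr: "z = complex_of_real r" unfolding r_def using imz by (simp add: complex_eqI)
  have ni: "\<not> isinv (a - sc z 1)" using z spec_iff by blast
  have s1: "z * z - of_real C * z \<in> spec (a * a - scaleR C a)"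
  proof -
    have "(a * a - scaleR C a) - sc (z * z - of_real C * z) 1 = (a - sc z 1) * (a - sc (of_real C - z) 1)"
      unfolding factor2 by (simp add: sc_real[symmetric] sc_diff_left algebra_simps)
    moreover have "\<not> isinv ((a - sc z 1) * (a - sc (of_real C - z) 1))"
      using isinv_comm_left[OF factor2_comm] ni by blast
    ultimately show ?thesis using spec_iff by simp
  qed
  hence "0 \<le> Re (z * z - of_real C * z)" using p1 unfolding pos_def' by blast
  hence c1: "0 \<le> r * r - C * r" unfolding zr by simp
  have s2: "of_real D * z - z * z \<in> spec (scaleR D a - a * a)"
  proof -
    have "(scaleR D a - a * a) - sc (of_real D * z - z * z) 1 = - ((a - sc z 1) * (a - sc (of_real D - z) 1))"
      unfolding factor2 by (simp add: sc_real[symmetric] sc_diff_left algebra_simps)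
    moreover have "\<not> isinv (- ((a - sc z 1) * (a - sc (of_real D - z) 1)))"
      using isinv_comm_left[OF factor2_comm] ni isinv_uminus_iff by blast
    ultimately show ?thesis using spec_iff by simp
  qed
  hence "0 \<le> Re (of_real D * z - z * z)" using p2 unfolding pos_def' by blast
  hence c2: "0 \<le> D * r - r * r" unfolding zr by simp
  have r0: "0 \<le> r" using rez unfolding r_def .
  have "r = 0 \<or> (C \<le> r \<and> r \<le> D)"
  proof (cases "r = 0")
    case False
    hence rp: "r > 0" using r0 by simp
    have "r * (r - C) \<ge> 0" using c1 by (simp add: algebra_simps)
    hence "r - C \<ge> 0" using rp by (simp add: zero_le_mult_iff)
    moreover have "r * (D - r) \<ge> 0" using c2 by (simp add: algebra_simps)
    hence "D - r \<ge> 0" using rp by (simp add: zero_le_mult_iff)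
    ultimately show ?thesis by simp
  qed simp
  thus ?thesis using imz rez unfolding r_def by simp
qed

end

context cstar
begin

lemma real_of_spec: "Im t = 0 \<Longrightarrow> t = complex_of_real (Re t)"
  by (simp add: complex_eqI)

lemma construct_proj:
  assumes pa: "pos a" and p1: "pos (a * a - scaleR C a)" and p2: "pos (scaleR D a - a * a)"
    and C0: "C > 0" and D0: "D > 0"
  shows "\<exists>b. star b = b \<and> (b * a * b) * (b * a * b) = b * a * b \<and> a * (b * b) * a = a"
proof -
  have sa: "star a = a" using pa by (rule pos_selfadj)
  define d where "d = max 0 (1 - C / D)"
  have d0: "0 \<le> d" and d1: "d < 1" unfolding d_def using C0 D0 by auto
  define h where "h = scaleR (1 / D) a"
  define u where "u = 1 - h"
  have su: "star u = u" unfolding u_def h_def by (simp add: star_diff star_scaleR sa)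
  have specu: "Im w = 0 \<and> (Re w = 1 \<or> (0 \<le> Re w \<and> Re w \<le> d))" if w: "w \<in> spec u" for w
  proof -
    define z where "z = complex_of_real D * (1 - w)"
    have eq: "u - sc w 1 = scaleR (- 1 / D) (a - sc z 1)"
    proof -
      have "scaleR (- 1 / D) (sc z 1) = sc (complex_of_real (- 1 / D) * z) 1" by (simp add: scaleR_sc)
      also have "complex_of_real (- 1 / D) * z = w - 1" unfolding z_def using D0
        by (simp add: field_simps)
      finally have "scaleR (- 1 / D) (sc z 1) = sc w 1 - 1" by (simp add: sc_diff_left)
      thus ?thesis unfolding u_def h_def by (simp add: scaleR_diff_right algebra_simps)
    qed
    have "z \<in> spec a"
    proof (rule ccontr)
      assume "z \<notin> spec a"
      hence "isinv (a - sc z 1)" using spec_iff by blast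
      hence "isinv (u - sc w 1)" unfolding eq using D0 by (intro isinv_scaleR) auto
      thus False using w spec_iff by blast
    qed
    hence g: "Im z = 0 \<and> 0 \<le> Re z \<and> (Re z = 0 \<or> (C \<le> Re z \<and> Re z \<le> D))"
      by (rule spec_gap[OF pa p1 p2])
    have imw: "Im w = 0" using g D0 unfolding z_def by simp
    have rez: "Re z = D * (1 - Re w)" unfolding z_def using imw by simp
    show ?thesis
    proof (cases "Re z = 0")
      case True thus ?thesis using imw rez D0 by simp
    next
      case False
      hence "C \<le> D * (1 - Re w)" "D * (1 - Re w) \<le> D" using g rez by auto
      hence "C / D \<le> 1 - Re w" "0 \<le> Re w" using D0 by (auto simp: divide_simps mult.commute)
      thus ?thesis using imw unfolding d_def by auto
    qed
  qed
  have b1: "norm (u ^ Suc N - u ^ N) \<le> d ^ N" for N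
  proof -
    define p where "p = monom (1::complex) (Suc N) - monom 1 N"
    have pe: "peval u p = u ^ Suc N - u ^ N" unfolding p_def by (simp add: peval_diff peval_monom1)
    have re: "\<forall>i. cnj (coeff p i) = coeff p i" unfolding p_def by simp
    have "coeff p (Suc N) \<noteq> 0" unfolding p_def by simp
    hence deg: "degree p \<ge> 1" using le_degree by fastforce
    have "norm (peval u p) \<le> d ^ N"
    proof (rule peval_norm_le[OF su re deg])
      show "0 \<le> d ^ N" using d0 by simp
      fix t assume t: "t \<in> spec u"
      have st: "Im t = 0 \<and> (Re t = 1 \<or> (0 \<le> Re t \<and> Re t \<le> d))" by (rule specu[OF t])
      define r where "r = Re t"
      have tr: "t = complex_of_real r" unfolding r_def using st real_of_spec by blast
      have "poly p t = complex_of_real (r ^ Suc N - r ^ N)" unfolding p_def tr by (simp add: poly_monom)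
      hence "cmod (poly p t) = \<bar>r ^ Suc N - r ^ N\<bar>" by (simp only: norm_of_real)
      also have "r ^ Suc N - r ^ N = r ^ N * (r - 1)" by (simp add: algebra_simps)
      finally have cp: "cmod (poly p t) = \<bar>r ^ N * (r - 1)\<bar>" .
      show "cmod (poly p t) \<le> d ^ N"
      proof (cases "r = 1")
        case True thus ?thesis using cp d0 by simp
      next
        case False
        hence r: "0 \<le> r" "r \<le> d" using st unfolding r_def by auto
        have "\<bar>r ^ N * (r - 1)\<bar> = r ^ N * (1 - r)" using r d1 by (simp add: abs_mult)
        also have "\<dots> \<le> r ^ N * 1" using r by (intro mult_left_mono) auto
        also have "\<dots> \<le> d ^ N" using r by (simp add: power_mono)
        finally show ?thesis using cp by simp
      qed
    qed
    thus ?thesis using pe by simp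
  qed
  have b2: "norm (u - u ^ N) \<le> d" if N: "N \<ge> 2" for N
  proof -
    define p where "p = monom (1::complex) 1 - monom 1 N"
    have pe: "peval u p = u - u ^ N" unfolding p_def by (simp add: peval_diff peval_monom1)
    have re: "\<forall>i. cnj (coeff p i) = coeff p i" unfolding p_def by simp
    have "coeff p N \<noteq> 0" unfolding p_def using N by simp
    hence "N \<le> degree p" using le_degree by blast
    hence deg: "degree p \<ge> 1" using N by simp
    have "norm (peval u p) \<le> d"
    proof (rule peval_norm_le[OF su re deg d0])
      fix t assume t: "t \<in> spec u"
      have st: "Im t = 0 \<and> (Re t = 1 \<or> (0 \<le> Re t \<and> Re t \<le> d))" by (rule specu[OF t])
      define r where "r = Re t"
      have tr: "t = complex_of_real r" unfolding r_def using st real_of_spec by blast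
      have "poly p t = complex_of_real (r - r ^ N)" unfolding p_def tr by (simp add: poly_monom)
      hence cp: "cmod (poly p t) = \<bar>r - r ^ N\<bar>" by (simp only: norm_of_real)
      show "cmod (poly p t) \<le> d"
      proof (cases "r = 1")
        case True thus ?thesis using cp d0 by simp
      next
        case False
        hence r: "0 \<le> r" "r \<le> d" using st unfolding r_def by auto
        have r1: "r \<le> 1" using r d1 by simp
        have "r ^ N \<le> r ^ 1" using r r1 N by (intro power_decreasing) auto
        moreover have "0 \<le> r ^ N" using r by simp
        ultimately have "\<bar>r - r ^ N\<bar> \<le> r" by simp
        thus ?thesis using cp r by simp
      qed
    qed
    thus ?thesis using pe by simp
  qed
  define g where "g k = u ^ Suc k - u ^ k" for k
  have sg: "summable g"
  proof (rule summable_norm_cancel, rule summable_comparison_test')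
    show "summable (\<lambda>k. d ^ k)" using d0 d1 by (simp add: summable_geometric)
    show "norm (norm (g k)) \<le> d ^ k" for k unfolding g_def using b1 by simp
  qed
  define q where "q = 1 + suminf g"
  have uN: "(\<lambda>N. u ^ N) \<longlonglongrightarrow> q"
  proof -
    have "(\<lambda>N. 1 + (\<Sum>k<N. g k)) \<longlonglongrightarrow> q" unfolding q_def
      by (intro tendsto_add tendsto_const summable_LIMSEQ[OF sg])
    moreover have "1 + (\<Sum>k<N. g k) = u ^ N" for N
      unfolding g_def using sum_lessThan_telescope[of "\<lambda>k. u ^ k" N] by simp
    ultimately show ?thesis by simp
  qed
  have uq: "u * q = q"
  proof -
    have "(\<lambda>N. u * u ^ N) \<longlonglongrightarrow> u * q" by (intro tendsto_mult tendsto_const uN)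
    moreover have "(\<lambda>N. u * u ^ N) \<longlonglongrightarrow> q" using LIMSEQ_Suc[OF uN] by simp
    ultimately show ?thesis using LIMSEQ_unique by blast
  qed
  have qu: "q * u = q"
  proof -
    have "(\<lambda>N. u ^ N * u) \<longlonglongrightarrow> q * u" by (intro tendsto_mult tendsto_const uN)
    moreover have "(\<lambda>N. u ^ N * u) \<longlonglongrightarrow> q" using LIMSEQ_Suc[OF uN] by (simp only: power_Suc2)
    ultimately show ?thesis using LIMSEQ_unique by blast
  qed
  have uNq: "u ^ N * q = q" for N
    by (induction N) (simp_all add: mult.assoc uq)
  have qq: "q * q = q"
  proof -
    have "(\<lambda>N. u ^ N * q) \<longlonglongrightarrow> q * q" by (intro tendsto_mult tendsto_const uN)
    thus ?thesis unfolding uNq using LIMSEQ_unique tendsto_const by blast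
  qed
  have sq: "star q = q"
  proof -
    have "(\<lambda>N. star (u ^ N)) \<longlonglongrightarrow> star q" by (rule bounded_linear.tendsto[OF bounded_linear_star uN])
    hence "(\<lambda>N. u ^ N) \<longlonglongrightarrow> star q" by (simp add: star_power su)
    thus ?thesis using uN LIMSEQ_unique by blast
  qed
  have nv: "norm (u - q) \<le> d"
  proof (rule Lim_norm_ubound)
    show "(\<lambda>N. u - u ^ N) \<longlonglongrightarrow> u - q" by (intro tendsto_diff tendsto_const uN)
    show "eventually (\<lambda>N. norm (u - u ^ N) \<le> d) sequentially"
      unfolding eventually_sequentially using b2 by blast
  qed simp
  define v where "v = u - q"
  have nv1: "norm v < 1" unfolding v_def using nv d1 by simp
  have sv: "star v = v" unfolding v_def by (simp add: star_diff su sq)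
  have vq: "v * q = 0" unfolding v_def by (simp add: left_diff_distrib uq qq)
  have qv: "q * v = 0" unfolding v_def by (simp add: right_diff_distrib qu qq)
  define r where "r = (\<Sum>k. scaleR (alpha k) (v ^ k))"
  have rr: "r * r * (1 - v) = 1" unfolding r_def by (rule sqrt_series(1)[OF nv1])
  have rcomm: "w * v = v * w \<Longrightarrow> w * r = r * w" for w unfolding r_def by (rule sqrt_series(2)[OF nv1])
  have sr: "star r = r" unfolding r_def by (rule sqrt_series(3)[OF nv1 sv])
  have rv: "v * r = r * v" by (rule rcomm) simp
  have qr: "q * r = r * q" by (rule rcomm) (simp add: vq qv)
  define e where "e = 1 - q"
  have ee: "e * e = e" unfolding e_def by (simp add: algebra_simps qq)
  have ev: "e * v = v" unfolding e_def by (simp add: algebra_simps qv)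
  have ve: "v * e = v" unfolding e_def by (simp add: algebra_simps vq)
  have er: "e * r = r * e" unfolding e_def by (simp add: algebra_simps qr)
  have se: "star e = e" unfolding e_def by (simp add: star_diff sq)
  have hq: "h * q = 0" using uq unfolding u_def by (simp add: left_diff_distrib)
  have heq: "h = (1 - v) * e" unfolding e_def v_def u_def by (simp add: algebra_simps qq hq)
  have heq2: "h = e * (1 - v)" unfolding heq by (simp add: algebra_simps ev ve)
  have r1v: "r * (1 - v) = (1 - v) * r" by (simp add: algebra_simps rv)
  have eh: "e * h = h" unfolding heq2 by (simp add: mult.assoc[symmetric] ee)
  have he: "h * e = h" unfolding heq by (simp add: mult.assoc ee)
  have hr: "h * r = r * h"
  proof -
    have "h * r = e * ((1 - v) * r)" unfolding heq2 by (simp add: mult.assoc)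
    also have "\<dots> = (e * r) * (1 - v)" by (simp add: r1v[symmetric] mult.assoc)
    also have "\<dots> = r * h" unfolding er heq2 by (simp add: mult.assoc)
    finally show ?thesis .
  qed
  define b0 where "b0 = r * e"
  have c1: "b0 * h * b0 = e"
  proof -
    have "b0 * h * b0 = r * (e * h) * (r * e)" unfolding b0_def by (simp add: mult.assoc)
    also have "\<dots> = r * (h * r) * e" unfolding eh by (simp add: mult.assoc)
    also have "\<dots> = r * r * (h * e)" unfolding hr by (simp add: mult.assoc)
    also have "\<dots> = (r * r * (1 - v)) * e" unfolding he by (subst heq) (simp add: mult.assoc)
    also have "\<dots> = e" unfolding rr by simp
    finally show ?thesis .
  qed
  have hr': "h * (r * z) = r * (h * z)" for z by (simp add: mult.assoc[symmetric] hr)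
  have er': "e * (r * z) = r * (e * z)" for z by (simp add: mult.assoc[symmetric] er)
  have ee': "e * (e * z) = e * z" for z by (simp add: mult.assoc[symmetric] ee)
  have eh': "e * (h * z) = h * z" for z by (simp add: mult.assoc[symmetric] eh)
  have he': "h * (e * z) = h * z" for z by (simp add: mult.assoc[symmetric] he)
  have hh: "h * h = (1 - v) * ((1 - v) * e)"
  proof -
    have "h * h = (1 - v) * (e * h)" by (subst (1) heq) (simp add: mult.assoc)
    also have "\<dots> = (1 - v) * ((1 - v) * e)" unfolding eh by (subst heq) (rule refl)
    finally show ?thesis .
  qed
  have c2: "h * (b0 * b0) * h = h"
  proof -
    have "h * (b0 * b0) * h = r * (r * (h * h))" unfolding b0_def by (simp add: mult.assoc hr' er' ee' eh' he')
    also have "\<dots> = (r * r * (1 - v)) * ((1 - v) * e)" unfolding hh by (simp add: mult.assoc)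
    also have "\<dots> = h" unfolding rr heq by simp
    finally show ?thesis .
  qed
  have sb0: "star b0 = b0" unfolding b0_def by (simp add: star_mult sr se er)
  define b where "b = scaleR (1 / sqrt D) b0"
  have aeq: "a = scaleR D h" unfolding h_def using D0 by simp
  have sD: "(1 / sqrt D) * D * (1 / sqrt D) = 1" using D0 by (simp add: divide_simps)
  have "b * a * b = scaleR ((1 / sqrt D) * D * (1 / sqrt D)) (b0 * h * b0)"
    unfolding b_def aeq by simp
  hence bab: "b * a * b = e" using sD c1 by simp
  have "a * (b * b) * a = scaleR (D * ((1 / sqrt D) * (1 / sqrt D)) * D) (h * (b0 * b0) * h)"
    unfolding b_def aeq by simp
  also have "D * ((1 / sqrt D) * (1 / sqrt D)) * D = D" using D0 by (simp add: divide_simps)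
  finally have abba: "a * (b * b) * a = a" using c2 aeq by simp
  have sb: "star b = b" unfolding b_def by (simp add: star_scaleR sb0)
  show ?thesis using sb bab abba ee by auto
qed

end

locale hmod = cstar sc star
  for sc :: "complex \<Rightarrow> 'a::{real_normed_algebra_1,banach} \<Rightarrow> 'a" and star +
  fixes act :: "'a \<Rightarrow> 'h::ab_group_add \<Rightarrow> 'h" and ip :: "'h \<Rightarrow> 'h \<Rightarrow> 'a"
  assumes hm: "hilbert_module sc star act ip"
begin

lemmas HM = hm[unfolded hilbert_module_def]
lemmas act_add_left = HM[THEN conjunct1, rule_format]
lemmas act_add_right = HM[THEN conjunct2, THEN conjunct1, rule_format]
lemmas act_mult = HM[THEN conjunct2, THEN conjunct2, THEN conjunct1, rule_format]
lemmas act_one = HM[THEN conjunct2, THEN conjunct2, THEN conjunct2, THEN conjunct1, rule_format]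
lemmas ip_add_left = HM[THEN conjunct2, THEN conjunct2, THEN conjunct2, THEN conjunct2, THEN conjunct1, rule_format]
lemmas ip_act_left = HM[THEN conjunct2, THEN conjunct2, THEN conjunct2, THEN conjunct2, THEN conjunct2, THEN conjunct1, rule_format]
lemmas ip_sym = HM[THEN conjunct2, THEN conjunct2, THEN conjunct2, THEN conjunct2, THEN conjunct2, THEN conjunct2, THEN conjunct1, rule_format]
lemmas ip_pos = HM[THEN conjunct2, THEN conjunct2, THEN conjunct2, THEN conjunct2, THEN conjunct2, THEN conjunct2, THEN conjunct2, THEN conjunct1, rule_format]
lemmas ip_def0 = HM[THEN conjunct2, THEN conjunct2, THEN conjunct2, THEN conjunct2, THEN conjunct2, THEN conjunct2, THEN conjunct2, THEN conjunct2, THEN conjunct1, rule_format]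

lemma act_zero_right [simp]: "act a 0 = 0" using act_add_right[of a 0 0] by simp
lemma act_zero_left [simp]: "act 0 x = 0" using act_add_left[of 0 0 x] by simp
lemma act_minus_right: "act a (- x) = - act a x"
  using act_add_right[of a "-x" x] by (simp add: eq_neg_iff_add_eq_0)
lemma act_diff_right: "act a (x - y) = act a x - act a y"
  using act_add_right[of a x "-y"] act_minus_right by simp
lemma act_minus_left: "act (- a) x = - act a x"
  using act_add_left[of "-a" a x] by (simp add: eq_neg_iff_add_eq_0)
lemma act_diff_left: "act (a - b) x = act a x - act b x"
  using act_add_left[of a "-b" x] act_minus_left by simp
lemma act_sum_right: "act a (\<Sum>i\<in>S. f i) = (\<Sum>i\<in>S. act a (f i))"
  by (induction S rule: infinite_finite_induct) (simp_all add: act_add_right)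

lemma ip_zero_left [simp]: "ip 0 y = 0" using ip_add_left[of 0 0 y] by simp
lemma ip_minus_left: "ip (- x) y = - ip x y"
  using ip_add_left[of "-x" x y] by (simp add: eq_neg_iff_add_eq_0)
lemma ip_diff_left: "ip (x - z) y = ip x y - ip z y"
  using ip_add_left[of x "-z" y] ip_minus_left by simp
lemma ip_sum_left: "ip (\<Sum>i\<in>S. f i) y = (\<Sum>i\<in>S. ip (f i) y)"
  by (induction S rule: infinite_finite_induct) (simp_all add: ip_add_left)
lemma ip_add_right: "ip x (y + z) = ip x y + ip x z"
  by (metis ip_add_left ip_sym star_add)
lemma ip_zero_right [simp]: "ip x 0 = 0" using ip_add_right[of x 0 0] by simp
lemma ip_minus_right: "ip x (- y) = - ip x y"
  using ip_add_right[of x "-y" y] by (simp add: eq_neg_iff_add_eq_0)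
lemma ip_diff_right: "ip x (y - z) = ip x y - ip x z"
  using ip_add_right[of x y "-z"] ip_minus_right by simp
lemma ip_sum_right: "ip x (\<Sum>i\<in>S. f i) = (\<Sum>i\<in>S. ip x (f i))"
  by (induction S rule: infinite_finite_induct) (simp_all add: ip_add_right)
lemma ip_act_right: "ip x (act a y) = ip x y * star a"
  by (metis ip_act_left ip_sym star_mult)
lemma ip_self_adj: "star (ip x x) = ip x x" using ip_sym[of x x] by simp
lemma ip_neg_self: "ip (- x) (- x) = ip x x" by (simp add: ip_minus_left ip_minus_right)

lemma eq_from_ip: "ip (x - y) (x - y) = 0 \<Longrightarrow> x = y"
  using ip_def0[of "x - y"] by simp

lemma tight:
  assumes orth: "\<And>i j. i \<in> K \<Longrightarrow> j \<in> K \<Longrightarrow> i \<noteq> j \<Longrightarrow> ip (y i) (y j) = 0"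
    and proj: "\<And>j. j \<in> K \<Longrightarrow> ip (y j) (y j) * ip (y j) (y j) = ip (y j) (y j)"
    and dense: "hclosure ip (alin_span act y K) = UNIV"
  shows "((\<lambda>j. ip x (y j) * ip (y j) x) has_sum ip x x) K"
proof -
  define p where "p j = ip (y j) (y j)" for j
  have sp: "star (p j) = p j" for j unfolding p_def by (rule ip_self_adj)
  have fixy: "act (p j) (y j) = y j" if j: "j \<in> K" for j
  proof (rule sym, rule eq_from_ip)
    have pp: "p j * p j = p j" using proj[OF j] unfolding p_def .
    show "ip (y j - act (p j) (y j)) (y j - act (p j) (y j)) = 0"
      by (simp add: ip_diff_left ip_diff_right ip_act_left ip_act_right sp pp
          flip: p_def mult.assoc)
  qed
  have coef: "ip z (y j) * p j = ip z (y j)" if j: "j \<in> K" for z j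
  proof -
    have "ip z (y j) * p j = ip z (act (p j) (y j))" by (simp add: ip_act_right sp)
    thus ?thesis using fixy[OF j] by simp
  qed
  define P where "P F z = (\<Sum>j\<in>F. act (ip z (y j)) (y j))" for F z
  define s where "s F z = (\<Sum>j\<in>F. ip z (y j) * ip (y j) z)" for F z
  have ipPy: "ip (P F z) (y k) = (if k \<in> F then ip z (y k) else 0)"
    if F: "F \<subseteq> K" "finite F" and k: "k \<in> K" for F z k
  proof -
    have "ip (P F z) (y k) = (\<Sum>j\<in>F. ip z (y j) * ip (y j) (y k))"
      unfolding P_def by (simp add: ip_sum_left ip_act_left)
    also have "\<dots> = (\<Sum>j\<in>F. if j = k then ip z (y k) else 0)"
    proof (rule sum.cong)
      fix j assume jF: "j \<in> F"
      show "ip z (y j) * ip (y j) (y k) = (if j = k then ip z (y k) else 0)"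
        using orth[of j k] jF F k coef[OF k, of z] unfolding p_def by auto
    qed simp
    also have "\<dots> = (if k \<in> F then ip z (y k) else 0)" using F by (simp add: sum.delta')
    finally show ?thesis .
  qed
  have decomp: "ip z z = ip (z - P F z) (z - P F z) + ip (P F z) (P F z)"
    "ip (z - P F z) (z - P F z) = ip z z - s F z"
    if F: "F \<subseteq> K" "finite F" for F z
  proof -
    have a: "ip z (P F z) = s F z" unfolding P_def s_def
      by (simp add: ip_sum_right ip_act_right ip_sym[of "y _" z, symmetric] flip: ip_sym)
    have b: "ip (P F z) z = s F z" unfolding P_def s_def by (simp add: ip_sum_left ip_act_left)
    have c: "ip (P F z) (P F z) = s F z"
    proof -
      have "ip (P F z) (P F z) = (\<Sum>k\<in>F. ip (P F z) (y k) * star (ip z (y k)))"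
        unfolding P_def[of F z] by (simp add: ip_sum_right ip_act_right)
      also have "\<dots> = (\<Sum>k\<in>F. ip z (y k) * ip (y k) z)"
      proof (rule sum.cong)
        fix k assume k: "k \<in> F"
        have "ip (P F z) (y k) = ip z (y k)" using ipPy[OF F, of k z] k F by auto
        moreover have "star (ip z (y k)) = ip (y k) z" by (rule ip_sym[symmetric])
        ultimately show "ip (P F z) (y k) * star (ip z (y k)) = ip z (y k) * ip (y k) z" by simp
      qed simp
      finally show ?thesis unfolding s_def .
    qed
    show "ip (z - P F z) (z - P F z) = ip z z - s F z"
      by (simp add: ip_diff_left ip_diff_right a b c)
    thus "ip z z = ip (z - P F z) (z - P F z) + ip (P F z) (P F z)" using c by simp
  qed
  have Plin: "P F (z - w) = P F z - P F w" for F z w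
    unfolding P_def by (simp add: ip_diff_left act_diff_left sum_subtractf)
  have Pfix: "P F w = w" if F: "F \<subseteq> K" "finite F" and F0: "F0 \<subseteq> F"
    and w: "w = (\<Sum>j\<in>F0. act (c j) (y j))" for F F0 c w
  proof -
    have fin0: "finite F0" using F0 F finite_subset by blast
    have ipw: "ip w (y k) = (if k \<in> F0 then c k * p k else 0)" if k: "k \<in> K" for k
    proof -
      have "ip w (y k) = (\<Sum>j\<in>F0. c j * ip (y j) (y k))" unfolding w by (simp add: ip_sum_left ip_act_left)
      also have "\<dots> = (\<Sum>j\<in>F0. if j = k then c k * p k else 0)"
      proof (rule sum.cong)
        fix j assume "j \<in> F0"
        thus "c j * ip (y j) (y k) = (if j = k then c k * p k else 0)"
          using orth[of j k] F0 F k unfolding p_def by auto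
      qed simp
      also have "\<dots> = (if k \<in> F0 then c k * p k else 0)" using fin0 by (simp add: sum.delta')
      finally show ?thesis .
    qed
    have "P F w = (\<Sum>k\<in>F. if k \<in> F0 then act (c k) (y k) else 0)"
      unfolding P_def
    proof (rule sum.cong)
      fix k assume k: "k \<in> F"
      hence kK: "k \<in> K" using F by blast
      show "act (ip w (y k)) (y k) = (if k \<in> F0 then act (c k) (y k) else 0)"
        using ipw[OF kK] fixy[OF kK] by (simp add: act_mult)
    qed simp
    also have "\<dots> = (\<Sum>k\<in>F \<inter> F0. act (c k) (y k))"
      using F by (simp add: sum.inter_restrict)
    also have "F \<inter> F0 = F0" using F0 by blast
    finally show ?thesis using w by simp
  qed
  show ?thesis
    unfolding has_sum_def tendsto_iff
  proof (intro allI impI)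
    fix \<epsilon> :: real assume \<epsilon>: "\<epsilon> > 0"
    have "x \<in> hclosure ip (alin_span act y K)" using dense by simp
    then obtain f where f: "\<And>n. f n \<in> alin_span act y K" "(\<lambda>n. hnorm ip (f n - x)) \<longlonglongrightarrow> 0"
      unfolding hclosure_def by blast
    have "eventually (\<lambda>n. hnorm ip (f n - x) < sqrt \<epsilon>) sequentially"
      using order_tendstoD(2)[OF f(2)] \<epsilon> by simp
    then obtain n where n: "hnorm ip (f n - x) < sqrt \<epsilon>" unfolding eventually_sequentially by blast
    define w where "w = f n"
    have nw: "norm (ip (x - w) (x - w)) < \<epsilon>"
    proof -
      have "ip (x - w) (x - w) = ip (w - x) (w - x)" using ip_neg_self[of "w - x"] by simp
      moreover have "sqrt (norm (ip (w - x) (w - x))) < sqrt \<epsilon>" using n unfolding w_def hnorm_def .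
      ultimately show ?thesis by simp
    qed
    obtain F0 c where F0: "finite F0" "F0 \<subseteq> K" and w: "w = (\<Sum>j\<in>F0. act (c j) (y j))"
      using f(1)[of n] unfolding w_def alin_span_def by blast
    show "eventually (\<lambda>F. dist (sum (\<lambda>j. ip x (y j) * ip (y j) x) F) (ip x x) < \<epsilon>) (finite_subsets_at_top K)"
      unfolding eventually_finite_subsets_at_top
    proof (intro exI conjI allI impI)
      show "finite F0" "F0 \<subseteq> K" by (rule F0)+
      fix Y assume Y: "finite Y \<and> F0 \<subseteq> Y \<and> Y \<subseteq> K"
      hence YK: "Y \<subseteq> K" "finite Y" and FY: "F0 \<subseteq> Y" by auto
      have "dist (sum (\<lambda>j. ip x (y j) * ip (y j) x) Y) (ip x x) = norm (ip x x - s Y x)"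
        unfolding s_def dist_norm by (rule norm_minus_commute)
      also have "ip x x - s Y x = ip (x - P Y x) (x - P Y x)" using decomp(2)[OF YK] by simp
      also have "x - P Y x = (x - w) - P Y (x - w)"
        unfolding Plin Pfix[OF YK FY w] by simp
      also have "norm (ip ((x - w) - P Y (x - w)) ((x - w) - P Y (x - w)))
          \<le> norm (ip ((x - w) - P Y (x - w)) ((x - w) - P Y (x - w)) + ip (P Y (x - w)) (P Y (x - w)))"
        by (rule pos_norm_mono[OF ip_pos ip_pos])
      also have "norm (ip ((x - w) - P Y (x - w)) ((x - w) - P Y (x - w)) + ip (P Y (x - w)) (P Y (x - w)))
          = norm (ip (x - w) (x - w))" using decomp(1)[OF YK, of "x - w"] by simp
      also have "\<dots> < \<epsilon>" by (rule nw)
      finally show "dist (sum (\<lambda>j. ip x (y j) * ip (y j) x) Y) (ip x x) < \<epsilon>" .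
    qed
  qed
qed

end

context hmod
begin

lemma hclosure_mono: "S \<subseteq> T \<Longrightarrow> hclosure ip S \<subseteq> hclosure ip T"
  unfolding hclosure_def by blast

lemma main_hmod:
  assumes orthX: "orthogonal_family ip xs J" and rb: "standard_riesz_basis sc star act ip xs J"
  shows "\<exists>(J'::nat set) (ys::nat \<Rightarrow> 'h).
           orthogonal_family ip ys J' \<and> standard_riesz_basis sc star act ip ys J' \<and>
           (\<forall>j\<in>J'. ip (ys j) (ys j) = ip (ys j) (ys j) * ip (ys j) (ys j)) \<and>
           hilbert_basis act ip ys J' \<and> normalized_tight_standard_frame ip ys J'"
proof -
  have sf: "standard_frame sc star ip xs J" and dense: "hclosure ip (alin_span act xs J) = UNIV"
    and uz: "unique_zero_repr act xs J" using rb unfolding standard_riesz_basis_def by auto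
  obtain C D :: real where C0: "C > 0" and D0: "D > 0" and fr: "\<And>x. \<exists>s.
      ((\<lambda>j. ip x (xs j) * ip (xs j) x) has_sum s) J \<and>
      cle sc star (scaleR C (ip x x)) s \<and> cle sc star s (scaleR D (ip x x))"
    using sf unfolding standard_frame_def by blast
  have orth: "\<And>i j. i \<in> J \<Longrightarrow> j \<in> J \<Longrightarrow> i \<noteq> j \<Longrightarrow> ip (xs i) (xs j) = 0"
    using orthX unfolding orthogonal_family_def by blast
  define A where "A j = ip (xs j) (xs j)" for j
  have sA: "star (A j) = A j" for j unfolding A_def by (rule ip_self_adj)
  have gap: "pos (A j * A j - scaleR C (A j)) \<and> pos (scaleR D (A j) - A j * A j)" if j: "j \<in> J" for j
  proof -
    obtain s where s: "((\<lambda>i. ip (xs j) (xs i) * ip (xs i) (xs j)) has_sum s) J"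
      "cle sc star (scaleR C (A j)) s" "cle sc star s (scaleR D (A j))"
      using fr[of "xs j"] unfolding A_def by blast
    have "((\<lambda>i. ip (xs j) (xs i) * ip (xs i) (xs j)) has_sum s) J \<longleftrightarrow>
          ((\<lambda>i. ip (xs j) (xs i) * ip (xs i) (xs j)) has_sum s) {j}"
      by (rule has_sum_cong_neutral) (use j orth in auto)
    hence "((\<lambda>i. ip (xs j) (xs i) * ip (xs i) (xs j)) has_sum s) {j}" using s(1) by simp
    moreover have "((\<lambda>i. ip (xs j) (xs i) * ip (xs i) (xs j)) has_sum (A j * A j)) {j}"
      using has_sum_finite[of "{j}" "\<lambda>i. ip (xs j) (xs i) * ip (xs i) (xs j)"] unfolding A_def by simp
    ultimately have "s = A j * A j" using has_sum_unique by blast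
    thus ?thesis using s(2,3) unfolding cle_def by simp
  qed
  define bb where "bb j = (SOME b. star b = b \<and> (b * A j * b) * (b * A j * b) = b * A j * b \<and> A j * (b * b) * A j = A j)" for j
  have bbP: "star (bb j) = bb j \<and> (bb j * A j * bb j) * (bb j * A j * bb j) = bb j * A j * bb j \<and>
             A j * (bb j * bb j) * A j = A j" if j: "j \<in> J" for j
    unfolding bb_def
    by (rule someI_ex, rule construct_proj[OF _ _ _ C0 D0]) (use gap[OF j] in \<open>auto simp: A_def ip_pos\<close>)
  define ys where "ys j = act (bb j) (xs j)" for j
  have ipys: "ip (ys i) (ys j) = bb i * ip (xs i) (xs j) * bb j" if "i \<in> J" "j \<in> J" for i j
    unfolding ys_def using bbP[OF that(2)] by (simp add: ip_act_left ip_act_right mult.assoc)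
  have ipyy: "ip (ys j) (ys j) = bb j * A j * bb j" if "j \<in> J" for j
    using ipys[OF that that] unfolding A_def .
  have idem: "ip (ys j) (ys j) * ip (ys j) (ys j) = ip (ys j) (ys j)" if "j \<in> J" for j
    using bbP[OF that] ipyy[OF that] by simp
  have recover: "xs j = act (A j * bb j) (ys j)" if j: "j \<in> J" for j
  proof -
    define c where "c = A j * (bb j * bb j)"
    have sb: "star (bb j) = bb j" and abba: "A j * (bb j * bb j) * A j = A j" using bbP[OF j] by auto
    have sc': "star c = bb j * bb j * A j" unfolding c_def by (simp add: star_mult sb sA mult.assoc)
    have cA: "c * A j = A j" unfolding c_def using abba .
    have Asc: "A j * star c = A j" unfolding sc' using abba by (simp add: mult.assoc)
    have cAsc: "c * A j * star c = A j" unfolding cA Asc ..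
    have "ip (xs j - act c (xs j)) (xs j - act c (xs j)) = A j - A j * star c - c * A j + c * A j * star c"
      unfolding A_def by (simp add: ip_diff_left ip_diff_right ip_act_left ip_act_right algebra_simps)
    also have "\<dots> = 0" unfolding cAsc cA Asc by simp
    finally have "xs j = act c (xs j)" by (rule eq_from_ip)
    thus ?thesis unfolding ys_def c_def by (simp add: act_mult mult.assoc)
  qed
  define J' where "J' = {j \<in> J. xs j \<noteq> 0}"
  have J'J: "J' \<subseteq> J" unfolding J'_def by blast
  have ysne: "ys j \<noteq> 0" if "j \<in> J'" for j
    using recover[of j] that unfolding J'_def by auto
  have orthY: "orthogonal_family ip ys J'"
    unfolding orthogonal_family_def
  proof (intro ballI impI)
    fix i j assume "i \<in> J'" "j \<in> J'" "i \<noteq> j"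
    hence "i \<in> J" "j \<in> J" "i \<noteq> j" using J'J by auto
    thus "ip (ys i) (ys j) = 0" by (simp add: ipys orth)
  qed
  have idemY: "\<forall>j\<in>J'. ip (ys j) (ys j) = ip (ys j) (ys j) * ip (ys j) (ys j)"
    using idem J'J by auto
  have norm1: "hnorm ip (ys j) = 1" if j: "j \<in> J'" for j
  proof -
    define p where "p = ip (ys j) (ys j)"
    have p0: "p \<noteq> 0" unfolding p_def using ysne[OF j] ip_def0 by blast
    have "norm p = norm (star p * p)" unfolding p_def using idem[of j] j J'J ip_self_adj by auto
    also have "\<dots> = (norm p)\<^sup>2" by (rule cstar_id)
    finally have "norm p = 1" using p0 by (simp add: power2_eq_square)
    thus ?thesis unfolding hnorm_def p_def by simp
  qed
  have span: "alin_span act xs J \<subseteq> alin_span act ys J'"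
  proof
    fix z assume "z \<in> alin_span act xs J"
    then obtain F c where F: "finite F" "F \<subseteq> J" and z: "z = (\<Sum>j\<in>F. act (c j) (xs j))"
      unfolding alin_span_def by blast
    have "z = (\<Sum>j\<in>F \<inter> J'. act (c j) (xs j))"
      unfolding z using F by (intro sum.mono_neutral_right) (auto simp: J'_def)
    also have "\<dots> = (\<Sum>j\<in>F \<inter> J'. act (c j * (A j * bb j)) (ys j))"
      by (rule sum.cong) (use recover J'J in \<open>auto simp: act_mult\<close>)
    finally have "z = (\<Sum>j\<in>F \<inter> J'. act (c j * (A j * bb j)) (ys j))" .
    moreover have "finite (F \<inter> J')" "F \<inter> J' \<subseteq> J'" using F by auto
    ultimately show "z \<in> alin_span act ys J'"
      unfolding alin_span_def mem_Collect_eq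
      by (intro exI[of _ "F \<inter> J'"] exI[of _ "\<lambda>j. c j * (A j * bb j)"]) simp
  qed
  have denseY: "hclosure ip (alin_span act ys J') = UNIV"
    using hclosure_mono[OF span] dense by blast
  have uzY: "unique_zero_repr act ys J'"
    unfolding unique_zero_repr_def
  proof (intro allI impI ballI)
    fix S a j assume H: "finite S \<and> S \<subseteq> J' \<and> (\<Sum>j\<in>S. act (a j) (ys j)) = 0" and j: "j \<in> S"
    have "(\<Sum>j\<in>S. act (a j * bb j) (xs j)) = 0" using H unfolding ys_def by (simp add: act_mult)
    moreover have "finite S" "S \<subseteq> J" using H J'J by auto
    ultimately have "act (a j * bb j) (xs j) = 0"
      using uz[unfolded unique_zero_repr_def, rule_format, of S "\<lambda>j. a j * bb j" j] j by blast
    thus "act (a j) (ys j) = 0" unfolding ys_def by (simp add: act_mult)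
  qed
  have tightY: "normalized_tight_standard_frame ip ys J'"
    unfolding normalized_tight_standard_frame_def
  proof
    fix x show "((\<lambda>j. ip x (ys j) * ip (ys j) x) has_sum ip x x) J'"
    proof (rule tight)
      show "\<And>i j. i \<in> J' \<Longrightarrow> j \<in> J' \<Longrightarrow> i \<noteq> j \<Longrightarrow> ip (ys i) (ys j) = 0"
        using orthY unfolding orthogonal_family_def by blast
      show "\<And>j. j \<in> J' \<Longrightarrow> ip (ys j) (ys j) * ip (ys j) (ys j) = ip (ys j) (ys j)"
        using idem J'J by auto
      show "hclosure ip (alin_span act ys J') = UNIV" by (rule denseY)
    qed
  qed
  have fr1: "\<forall>x. \<exists>s. ((\<lambda>j. ip x (ys j) * ip (ys j) x) has_sum s) J' \<and>
        cle sc star (scaleR 1 (ip x x)) s \<and> cle sc star s (scaleR 1 (ip x x))"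
  proof
    fix x
    have "((\<lambda>j. ip x (ys j) * ip (ys j) x) has_sum ip x x) J'"
      using tightY unfolding normalized_tight_standard_frame_def by blast
    moreover have "cle sc star (scaleR 1 (ip x x)) (ip x x)" unfolding cle_def using pos_zero by simp
    ultimately show "\<exists>s. ((\<lambda>j. ip x (ys j) * ip (ys j) x) has_sum s) J' \<and>
        cle sc star (scaleR 1 (ip x x)) s \<and> cle sc star s (scaleR 1 (ip x x))" by auto
  qed
  have sfY: "standard_frame sc star ip ys J'"
    unfolding standard_frame_def
    by (rule exI[of _ "1::real"], rule exI[of _ "1::real"]) (use fr1 in simp)
  show ?thesis
    using orthY sfY denseY uzY idemY norm1 tightY
    unfolding standard_riesz_basis_def hilbert_basis_def by blast
qed

end

theorem proposition2p5:
  fixes sc :: "complex \<Rightarrow> 'a::{real_normed_algebra_1,banach} \<Rightarrow> 'a"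
    and star :: "'a \<Rightarrow> 'a"
    and act :: "'a \<Rightarrow> 'h::ab_group_add \<Rightarrow> 'h"
    and ip :: "'h \<Rightarrow> 'h \<Rightarrow> 'a"
  assumes "cstar_algebra sc star"
    and "hilbert_module sc star act ip"
    and "finitely_generated act \<or> countably_generated act ip"
    and "\<exists>(J::nat set) (xs::nat \<Rightarrow> 'h). orthogonal_family ip xs J \<and> standard_riesz_basis sc star act ip xs J"
  shows "\<exists>(J::nat set) (xs::nat \<Rightarrow> 'h).
           orthogonal_family ip xs J \<and> standard_riesz_basis sc star act ip xs J \<and>
           (\<forall>j\<in>J. ip (xs j) (xs j) = ip (xs j) (xs j) * ip (xs j) (xs j)) \<and>
           hilbert_basis act ip xs J \<and> normalized_tight_standard_frame ip xs J"
proof -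
  interpret hmod sc star act ip
    by unfold_locales (rule assms(1), rule assms(2))
  obtain J xs where "orthogonal_family ip xs J" "standard_riesz_basis sc star act ip xs J"
    using assms(4) by blast
  thus ?thesis by (rule main_hmod)
qed


end
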